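(* Let $\widetilde{\Sigma}_1,\widetilde{\Sigma}_2$ be disjoint visibly pushdown alphabets, $\widetilde{\Sigma}=\widetilde{\Sigma}_1\uplus\widetilde{\Sigma}_2$, and $P_1\subseteq\widetilde{\Sigma}_1^*$, $P_2\subseteq\widetilde{\Sigma}_2^*$ well-matched visibly pushdown languages. If $\prec$ is a contextual order on $\widetilde{\Sigma}$ that is both visibly pushdown and coherent, then $\mathrm{red}_\prec(P_1\parallel P_2)$ is a visibly pushdown language and every word in it is well-nested.
   Context: A visibly pushdown (VP) alphabet is a finite alphabet partitioned into calls, returns and internals; write $\Sigma^{\mathsf{call}}_i,\Sigma^{\mathsf{ret}}_i$ for the calls and returns of $\widetilde{\Sigma}_i$; $\widetilde{\Sigma}$ has as calls/returns/internals the unions. Calls and returns in a word are matched like opening and closing parentheses (internals ignored); unmatched ones are pending; a word is well-matched if none are pending. A visibly pushdown automaton (VPA) is a pushdown automaton with bottom symbol $\bot$ that pushes one non-$\bot$ symbol on each call, pops the top on each return (reading $\bot$ on empty stack without removing it), and leaves the stack unchanged on internals; visibly pushdown languages are those accepted by VPAs. Shuffle: $P_1\parallel P_2=\{w\in\widetilde{\Sigma}^*:\Pi_{\widetilde{\Sigma}_i}(w)\in P_i\}$, $\Pi_{\widetilde{\Sigma}_i}$ erasing letters outside $\widetilde{\Sigma}_i$. A word is well-nested if every matched call–return pair consists of letters from the same $\widetilde{\Sigma}_k$. $\mathbb{I}=\{(a,b):a\in\widetilde{\Sigma}_i,b\in\widetilde{\Sigma}_j,i\ne j\}$, $\equiv_{\mathbb{I}}$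 the least reflexive transitive relation with $uabv\equiv_{\mathbb{I}}ubav$ for $(a,b)\in\mathbb{I}$. A contextual order is a map $\prec$ from $\widetilde{\Sigma}^*$ to strict total orders on $\widetilde{\Sigma}$; it induces $\preceq$: $\sigma\preceq\rho$ iff $\sigma$ is a prefix of $\rho$ or $\sigma=\alpha a\beta$, $\rho=\alpha b\gamma$ with $a\prec_\alpha b$. $\mathrm{red}_\prec(L)=\{w\in L:\forall u\in L,(u\equiv_{\mathbb{I}}w\wedge u\preceq w)\Rightarrow u=w\}$. $\prec$ is visibly pushdown if there is a complete deterministic VPA $A$ over $\widetilde{\Sigma}$ and a map $\mathsf{ord}$ from its states to strict total orders on $\widetilde{\Sigma}$ with $\prec_w=\mathsf{ord}(q)$, $q$ the state reached by $A$ after reading $w$. $\prec$ is coherent if for every $u\in\widetilde{\Sigma}^*$ and $i\in\{1,2\}$: if $u$ has pending calls and the last one is in $\Sigma^{\mathsf{call}}_i$, then $a\prec_u r$ for all $a\in\widetilde{\Sigma}_i$, $r\in\bigcup_{j\ne i}\Sigma^{\mathsf{ret}}_j$. *)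

theory Defs
  imports Main
begin

type_synonym 'a vpalph = "'a set \<times> 'a set \<times> 'a set"

definition calls :: "'a vpalph \<Rightarrow> 'a set" where "calls A = fst A"
definition rets :: "'a vpalph \<Rightarrow> 'a set" where "rets A = fst (snd A)"
definition ints :: "'a vpalph \<Rightarrow> 'a set" where "ints A = snd (snd A)"
definition letters :: "'a vpalph \<Rightarrow> 'a set" where
  "letters A = calls A \<union> rets A \<union> ints A"

definition vp_alphabet :: "'a vpalph \<Rightarrow> bool" where
  "vp_alphabet A \<longleftrightarrow> finite (letters A) \<and> calls A \<inter> rets A = {} \<and>
     calls A \<inter> ints A = {} \<and> rets A \<inter> ints A = {}"

definition vp_union :: "'a vpalph \<Rightarrow> 'a vpalph \<Rightarrow> 'a vpalph" where
  "vp_union A B = (calls A \<union> calls B, rets A \<union> rets B, ints A \<union> ints B)"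

inductive balanced :: "'a vpalph \<Rightarrow> 'a list \<Rightarrow> bool" for A where
  bal_nil: "balanced A []"
| bal_int: "a \<notin> calls A \<Longrightarrow> a \<notin> rets A \<Longrightarrow> balanced A [a]"
| bal_app: "balanced A u \<Longrightarrow> balanced A v \<Longrightarrow> balanced A (u @ v)"
| bal_nest: "c \<in> calls A \<Longrightarrow> r \<in> rets A \<Longrightarrow> balanced A u \<Longrightarrow> balanced A (c # u @ [r])"

definition matched :: "'a vpalph \<Rightarrow> 'a list \<Rightarrow> nat \<Rightarrow> nat \<Rightarrow> bool" where
  "matched A w i j \<longleftrightarrow> i < j \<and> j < length w \<and> w ! i \<in> calls A \<and> w ! j \<in> rets A \<and>
     balanced A (take (j - i - 1) (drop (i + 1) w))"

definition pending_call :: "'a vpalph \<Rightarrow> 'a list \<Rightarrow> nat \<Rightarrow> bool" where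
  "pending_call A w i \<longleftrightarrow> i < length w \<and> w ! i \<in> calls A \<and> \<not> (\<exists>j. matched A w i j)"

definition pending_ret :: "'a vpalph \<Rightarrow> 'a list \<Rightarrow> nat \<Rightarrow> bool" where
  "pending_ret A w j \<longleftrightarrow> j < length w \<and> w ! j \<in> rets A \<and> \<not> (\<exists>i. matched A w i j)"

definition well_matched :: "'a vpalph \<Rightarrow> 'a list \<Rightarrow> bool" where
  "well_matched A w \<longleftrightarrow> (\<forall>i. \<not> pending_call A w i) \<and> (\<forall>j. \<not> pending_ret A w j)"

definition well_nested :: "'a vpalph \<Rightarrow> 'a vpalph \<Rightarrow> 'a list \<Rightarrow> bool" where
  "well_nested A1 A2 w \<longleftrightarrow> (\<forall>i j. matched (vp_union A1 A2) w i j \<longrightarrow>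
     (w ! i \<in> letters A1 \<and> w ! j \<in> letters A1) \<or> (w ! i \<in> letters A2 \<and> w ! j \<in> letters A2))"

text \<open>States and stack symbols are natural numbers. The bottom symbol is
represented by None / the empty stack.\<close>
record 'a vpa =
  st :: "nat set"
  init :: "nat set"
  fin :: "nat set"
  gam :: "nat set"
  dcall :: "(nat \<times> 'a \<times> nat \<times> nat) set"       \<comment> \<open>(q, a, q', pushed symbol)\<close>
  dret :: "(nat \<times> 'a \<times> nat option \<times> nat) set" \<comment> \<open>(q, a, top (None = bottom), q')\<close>
  dint :: "(nat \<times> 'a \<times> nat) set"

definition vpa_wf :: "'a vpalph \<Rightarrow> 'a vpa \<Rightarrow> bool" where
  "vpa_wf A M \<longleftrightarrow> finite (st M) \<and> finite (gam M) \<and> init M \<subseteq> st M \<and> fin M \<subseteq> st M \<and>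
     (\<forall>(q,a,q',g) \<in> dcall M. q \<in> st M \<and> a \<in> calls A \<and> q' \<in> st M \<and> g \<in> gam M) \<and>
     (\<forall>(q,a,g,q') \<in> dret M. q \<in> st M \<and> a \<in> rets A \<and> q' \<in> st M \<and> (\<forall>x. g = Some x \<longrightarrow> x \<in> gam M)) \<and>
     (\<forall>(q,a,q') \<in> dint M. q \<in> st M \<and> a \<in> ints A \<and> q' \<in> st M)"

definition vpa_step :: "'a vpalph \<Rightarrow> 'a vpa \<Rightarrow> nat \<times> nat list \<Rightarrow> 'a \<Rightarrow> nat \<times> nat list \<Rightarrow> bool" where
  "vpa_step A M c a c' \<longleftrightarrow>
    (case c of (q, s) \<Rightarrow> case c' of (q', s') \<Rightarrow>
      (a \<in> calls A \<and> (\<exists>g. (q, a, q', g) \<in> dcall M \<and> s' = g # s)) \<or>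
      (a \<in> rets A \<and> ((s = [] \<and> s' = [] \<and> (q, a, None, q') \<in> dret M) \<or>
                     (\<exists>g. s = g # s' \<and> (q, a, Some g, q') \<in> dret M))) \<or>
      (a \<in> ints A \<and> (q, a, q') \<in> dint M \<and> s' = s))"

fun vpa_reach :: "'a vpalph \<Rightarrow> 'a vpa \<Rightarrow> nat \<times> nat list \<Rightarrow> 'a list \<Rightarrow> nat \<times> nat list \<Rightarrow> bool" where
  "vpa_reach A M c [] c' \<longleftrightarrow> c' = c"
| "vpa_reach A M c (a # w) c' \<longleftrightarrow> (\<exists>c''. vpa_step A M c a c'' \<and> vpa_reach A M c'' w c')"

definition vpa_lang :: "'a vpalph \<Rightarrow> 'a vpa \<Rightarrow> 'a list set" where
  "vpa_lang A M = {w. \<exists>q0 \<in> init M. \<exists>q s. vpa_reach A M (q0, []) w (q, s) \<and> q \<in> fin M}"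

definition is_VPL :: "'a vpalph \<Rightarrow> 'a list set \<Rightarrow> bool" where
  "is_VPL A L \<longleftrightarrow> (\<exists>M. vpa_wf A M \<and> vpa_lang A M = L)"

definition det_complete :: "'a vpalph \<Rightarrow> 'a vpa \<Rightarrow> bool" where
  "det_complete A M \<longleftrightarrow> vpa_wf A M \<and> (\<exists>q0. init M = {q0}) \<and>
     (\<forall>q \<in> st M. \<forall>a \<in> calls A. \<exists>!p. (q, a, p) \<in> dcall M) \<and>
     (\<forall>q \<in> st M. \<forall>a \<in> rets A. \<forall>g \<in> insert None (Some ` gam M). \<exists>!q'. (q, a, g, q') \<in> dret M) \<and>
     (\<forall>q \<in> st M. \<forall>a \<in> ints A. \<exists>!q'. (q, a, q') \<in> dint M)"

definition shuffle :: "'a vpalph \<Rightarrow> 'a vpalph \<Rightarrow> 'a list set \<Rightarrow> 'a list set \<Rightarrow> 'a list set" where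
  "shuffle A1 A2 P1 P2 = {w \<in> lists (letters (vp_union A1 A2)).
     filter (\<lambda>x. x \<in> letters A1) w \<in> P1 \<and> filter (\<lambda>x. x \<in> letters A2) w \<in> P2}"

definition indep :: "'a vpalph \<Rightarrow> 'a vpalph \<Rightarrow> 'a \<Rightarrow> 'a \<Rightarrow> bool" where
  "indep A1 A2 a b \<longleftrightarrow> (a \<in> letters A1 \<and> b \<in> letters A2) \<or> (a \<in> letters A2 \<and> b \<in> letters A1)"

definition swap_step :: "'a vpalph \<Rightarrow> 'a vpalph \<Rightarrow> 'a list \<Rightarrow> 'a list \<Rightarrow> bool" where
  "swap_step A1 A2 x y \<longleftrightarrow> (\<exists>u a b v. indep A1 A2 a b \<and> x = u @ a # b # v \<and> y = u @ b # a # v)"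

definition equivI :: "'a vpalph \<Rightarrow> 'a vpalph \<Rightarrow> 'a list \<Rightarrow> 'a list \<Rightarrow> bool" where
  "equivI A1 A2 = (swap_step A1 A2)\<^sup>*\<^sup>*"

definition strict_total_on :: "'a set \<Rightarrow> ('a \<Rightarrow> 'a \<Rightarrow> bool) \<Rightarrow> bool" where
  "strict_total_on S r \<longleftrightarrow> (\<forall>x\<in>S. \<not> r x x) \<and>
     (\<forall>x\<in>S. \<forall>y\<in>S. \<forall>z\<in>S. r x y \<longrightarrow> r y z \<longrightarrow> r x z) \<and>
     (\<forall>x\<in>S. \<forall>y\<in>S. x \<noteq> y \<longrightarrow> r x y \<or> r y x)"

definition contextual_order :: "'a vpalph \<Rightarrow> ('a list \<Rightarrow> 'a \<Rightarrow> 'a \<Rightarrow> bool) \<Rightarrow> bool" where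
  "contextual_order A prec \<longleftrightarrow> (\<forall>w \<in> lists (letters A). strict_total_on (letters A) (prec w))"

definition ctx_le :: "('a list \<Rightarrow> 'a \<Rightarrow> 'a \<Rightarrow> bool) \<Rightarrow> 'a list \<Rightarrow> 'a list \<Rightarrow> bool" where
  "ctx_le prec \<sigma> \<rho> \<longleftrightarrow> (\<exists>t. \<rho> = \<sigma> @ t) \<or>
     (\<exists>\<alpha> a \<beta> b \<gamma>. \<sigma> = \<alpha> @ a # \<beta> \<and> \<rho> = \<alpha> @ b # \<gamma> \<and> prec \<alpha> a b)"

definition red :: "'a vpalph \<Rightarrow> 'a vpalph \<Rightarrow> ('a list \<Rightarrow> 'a \<Rightarrow> 'a \<Rightarrow> bool) \<Rightarrow> 'a list set \<Rightarrow> 'a list set" where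
  "red A1 A2 prec L = {w \<in> L. \<forall>u \<in> L. (equivI A1 A2 u w \<and> ctx_le prec u w) \<longrightarrow> u = w}"

definition vp_order :: "'a vpalph \<Rightarrow> ('a list \<Rightarrow> 'a \<Rightarrow> 'a \<Rightarrow> bool) \<Rightarrow> bool" where
  "vp_order A prec \<longleftrightarrow> (\<exists>M ord q0. det_complete A M \<and> init M = {q0} \<and>
     (\<forall>q \<in> st M. strict_total_on (letters A) (ord q)) \<and>
     (\<forall>w \<in> lists (letters A). \<forall>q s. vpa_reach A M (q0, []) w (q, s) \<longrightarrow> prec w = ord q))"

definition coherent1 :: "'a vpalph \<Rightarrow> 'a vpalph \<Rightarrow> ('a list \<Rightarrow> 'a \<Rightarrow> 'a \<Rightarrow> bool) \<Rightarrow> bool" where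
  "coherent1 Ai Aj prec \<longleftrightarrow> (\<forall>u \<in> lists (letters (vp_union Ai Aj)).
     (\<exists>i. pending_call (vp_union Ai Aj) u i \<and>
          (\<forall>k. pending_call (vp_union Ai Aj) u k \<longrightarrow> k \<le> i) \<and> u ! i \<in> calls Ai)
     \<longrightarrow> (\<forall>a \<in> letters Ai. \<forall>r \<in> rets Aj. prec u a r))"

definition coherent :: "'a vpalph \<Rightarrow> 'a vpalph \<Rightarrow> ('a list \<Rightarrow> 'a \<Rightarrow> 'a \<Rightarrow> bool) \<Rightarrow> bool" where
  "coherent A1 A2 prec \<longleftrightarrow> coherent1 A1 A2 prec \<and> coherent1 A2 A1 prec"

end

theory Submission
  imports Defs
begin

fun run :: "'a vpalph \<Rightarrow> 'a list \<Rightarrow> nat \<Rightarrow> nat option" where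
  "run A [] n = Some n"
| "run A (x # v) n = (if x \<in> calls A then run A v (Suc n)
     else if x \<in> rets A then (if n = 0 then None else run A v (n - 1))
     else run A v n)"

lemma run_append: "run A (u @ v) n = (case run A u n of None \<Rightarrow> None | Some m \<Rightarrow> run A v m)"
  by (induction u arbitrary: n) auto

lemma run_None_app: "run A u n = None \<Longrightarrow> run A (u @ v) n = None"
  by (simp add: run_append)

lemma run_snoc: "run A (u @ [x]) n = (case run A u n of None \<Rightarrow> None | Some m \<Rightarrow>
   (if x \<in> calls A then Some (Suc m) else if x \<in> rets A then (if m = 0 then None else Some (m - 1)) else Some m))"
  by (simp add: run_append split: option.splits)

lemma run_shift: "run A v n = Some m \<Longrightarrow> run A v (n + k) = Some (m + k)"
proof (induction v arbitrary: n)
  case (Cons x v)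
  show ?case
  proof (cases "x \<in> calls A")
    case True
    then show ?thesis using Cons.IH[of "Suc n"] Cons.prems by simp
  next
    case False
    then show ?thesis
    proof (cases "x \<in> rets A")
      case True
      then have "n \<noteq> 0" "run A v (n - 1) = Some m" using Cons.prems False by (auto split: if_splits)
      moreover have "n - 1 + k = n + k - 1" using \<open>n \<noteq> 0\<close> by simp
      ultimately show ?thesis using Cons.IH[of "n - 1"] True False by simp
    qed (use Cons in simp)
  qed
qed simp

lemma run_shift0: "run A v 0 = Some m \<Longrightarrow> run A v k = Some (m + k)"
  using run_shift[of A v 0 m k] by simp

lemma balanced_run:
  assumes "calls A \<inter> rets A = {}"
  shows "balanced A v \<Longrightarrow> run A v n = Some n"
proof (induction v arbitrary: n rule: balanced.induct)
  case (bal_nest c r u)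
  then show ?case using assms by (auto simp: run_append)
qed (auto simp: run_append)

lemma run_decomp:
  "run A v 0 = Some d \<Longrightarrow> e < d \<Longrightarrow> \<exists>k<length v. v ! k \<in> calls A \<and> run A (drop (Suc k) v) 0 = Some e"
proof (induction v arbitrary: d e rule: rev_induct)
  case Nil
  then show ?case by simp
next
  case (snoc x v)
  obtain d' where d': "run A v 0 = Some d'"
    using snoc.prems by (cases "run A v 0") (auto simp: run_snoc)
  show ?case
  proof (cases "x \<in> calls A")
    case True
    then have dd: "d = Suc d'" using snoc.prems d' by (simp add: run_snoc)
    show ?thesis
    proof (cases e)
      case 0
      then show ?thesis using True by (intro exI[of _ "length v"]) auto
    next
      case (Suc e')
      then obtain k where "k < length v" "v ! k \<in> calls A" "run A (drop (Suc k) v) 0 = Some e'"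
        using snoc.IH[OF d', of e'] snoc.prems dd by auto
      then show ?thesis using True Suc
        by (intro exI[of _ k]) (auto simp: nth_append run_snoc)
    qed
  next
    case False
    note F = False
    show ?thesis
    proof (cases "x \<in> rets A")
      case True
      then obtain d'' where dd: "d' = Suc d''" "d = d''" using snoc.prems d' F
        by (cases d') (auto simp: run_snoc)
      then obtain k where "k < length v" "v ! k \<in> calls A" "run A (drop (Suc k) v) 0 = Some (Suc e)"
        using snoc.IH[OF d', of "Suc e"] snoc.prems by auto
      then show ?thesis using True F
        by (intro exI[of _ k]) (auto simp: nth_append run_snoc)
    next
      case False
      then have "d = d'" using snoc.prems d' F by (simp add: run_snoc)
      then obtain k where "k < length v" "v ! k \<in> calls A" "run A (drop (Suc k) v) 0 = Some e"
        using snoc.IH[OF d', of e] snoc.prems by auto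
      then show ?thesis using False F
        by (intro exI[of _ k]) (auto simp: nth_append run_snoc)
    qed
  qed
qed

lemma run_balanced:
  assumes "calls A \<inter> rets A = {}"
  shows "run A v 0 = Some 0 \<Longrightarrow> balanced A v"
proof (induction "length v" arbitrary: v rule: less_induct)
  case less
  show ?case
  proof (cases v rule: rev_cases)
    case Nil
    then show ?thesis by (simp add: bal_nil)
  next
    case (snoc v' x)
    obtain d' where d': "run A v' 0 = Some d'"
      using less.prems snoc by (cases "run A v' 0") (auto simp: run_snoc)
    show ?thesis
    proof (cases "x \<in> calls A")
      case True
      then show ?thesis using less.prems snoc d' by (simp add: run_snoc)
    next
      case F: False
      show ?thesis
      proof (cases "x \<in> rets A")
        case True
        then have d1: "d' = 1" using less.prems snoc d' F by (cases d') (auto simp: run_snoc)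
        obtain k where k: "k < length v'" "v' ! k \<in> calls A" "run A (drop (Suc k) v') 0 = Some 0"
          using run_decomp[OF d'[unfolded d1], of 0] by auto
        have v'eq: "v' = take k v' @ v' ! k # drop (Suc k) v'"
          using k(1) by (simp add: id_take_nth_drop)
        have rv: "run A v' 0 = (case run A (take k v') 0 of None \<Rightarrow> None | Some m \<Rightarrow> run A (v' ! k # drop (Suc k) v') m)"
          using run_append[of A "take k v'" "v' ! k # drop (Suc k) v'" 0] by (simp only: v'eq[symmetric])
        obtain a where a: "run A (take k v') 0 = Some a"
          using rv d' by (cases "run A (take k v') 0") auto
        have "run A v' 0 = Some (Suc a)"
          using rv a k(2) run_shift0[OF k(3), of "Suc a"] by simp
        then have a0: "a = 0" using d' d1 by simp
        have b1: "balanced A (take k v')"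
          using less.hyps[of "take k v'"] a a0 snoc k(1) by simp
        have b2: "balanced A (drop (Suc k) v')"
          using less.hyps[of "drop (Suc k) v'"] k snoc by simp
        have "balanced A (take k v' @ (v' ! k # drop (Suc k) v' @ [x]))"
          by (rule bal_app[OF b1 bal_nest[OF k(2) True b2]])
        then show ?thesis using snoc v'eq by (metis append.assoc append_Cons)
      next
        case False
        then have "d' = 0" using less.prems snoc d' F by (simp add: run_snoc)
        moreover have "length v' < length v" using snoc by simp
        ultimately have "balanced A v'" using less.hyps d' by blast
        then show ?thesis using snoc bal_app[OF _ bal_int[OF F False]] by blast
      qed
    qed
  qed
qed


lemma run_None_split:
  "run A v 0 = None \<Longrightarrow> \<exists>p x q. v = p @ x # q \<and> run A p 0 = Some 0 \<and> x \<in> rets A \<and> x \<notin> calls A"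
proof (induction v rule: rev_induct)
  case Nil then show ?case by simp
next
  case (snoc x v)
  show ?case
  proof (cases "run A v 0")
    case None
    then obtain p y q where "v = p @ y # q" "run A p 0 = Some 0" "y \<in> rets A" "y \<notin> calls A"
      using snoc.IH by blast
    then show ?thesis by (intro exI[of _ p] exI[of _ y] exI[of _ "q @ [x]"]) auto
  next
    case (Some m)
    then have "m = 0" "x \<in> rets A" "x \<notin> calls A" using snoc.prems
      by (auto simp: run_snoc split: if_splits)
    then show ?thesis using Some by (intro exI[of _ v] exI[of _ x] exI[of _ "[]"]) auto
  qed
qed

lemma drop_take_seg: "take (j - i - 1) (drop (i + 1) w) = drop (Suc i) (take j w)"
  by (simp add: drop_take)

lemma pending_call_run:
  assumes "calls A \<inter> rets A = {}"
  shows "pending_call A u i \<longleftrightarrow> i < length u \<and> u ! i \<in> calls A \<and> run A (drop (Suc i) u) 0 \<noteq> None"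
proof
  assume pc: "pending_call A u i"
  then have i: "i < length u" "u ! i \<in> calls A" by (auto simp: pending_call_def)
  show "i < length u \<and> u ! i \<in> calls A \<and> run A (drop (Suc i) u) 0 \<noteq> None"
  proof (rule ccontr)
    assume "\<not> ?thesis"
    then have "run A (drop (Suc i) u) 0 = None" using i by simp
    then obtain p x q where pxq: "drop (Suc i) u = p @ x # q" "run A p 0 = Some 0" "x \<in> rets A"
      using run_None_split by blast
    define j where "j = Suc i + length p"
    have "length (drop (Suc i) u) = length p + Suc (length q)" using pxq(1) by simp
    then have lenu: "length u = Suc i + length p + Suc (length q)" using i(1) by simp
    have uj: "u ! j = x"
    proof -
      have "u ! j = drop (Suc i) u ! length p" using i lenu by (simp add: j_def)
      then show ?thesis using pxq(1) by simp
    qed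
    have seg: "take (j - i - 1) (drop (i + 1) u) = p"
      using pxq(1) by (simp add: j_def)
    have "matched A u i j"
      unfolding matched_def using i lenu uj pxq seg run_balanced[OF assms pxq(2)]
      by (simp add: j_def)
    then show False using pc by (auto simp: pending_call_def)
  qed
next
  assume h: "i < length u \<and> u ! i \<in> calls A \<and> run A (drop (Suc i) u) 0 \<noteq> None"
  show "pending_call A u i"
    unfolding pending_call_def
  proof (intro conjI notI)
    show "i < length u" "u ! i \<in> calls A" using h by auto
    assume "\<exists>j. matched A u i j"
    then obtain j where m: "matched A u i j" by blast
    then have jj: "i < j" "j < length u" "u ! j \<in> rets A" and b: "balanced A (drop (Suc i) (take j u))"
      by (auto simp: matched_def drop_take)
    have r0: "run A (drop (Suc i) (take j u)) 0 = Some 0" using balanced_run[OF assms b] .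
    have "drop (Suc i) u = drop (Suc i) (take j u @ drop j u)" by simp
    also have "\<dots> = drop (Suc i) (take j u) @ drop j u" using jj by (simp only: drop_append) simp
    also have "drop j u = u ! j # drop (Suc j) u" using jj by (simp add: Cons_nth_drop_Suc)
    finally have "drop (Suc i) u = drop (Suc i) (take j u) @ u ! j # drop (Suc j) u" .
    then have "run A (drop (Suc i) u) 0 = None"
      using r0 jj(3) assms by (auto simp: run_append)
    then show False using h by simp
  qed
qed

fun pk :: "'a vpalph \<Rightarrow> 'a list \<Rightarrow> nat \<Rightarrow> nat list" where
  "pk A v 0 = []"
| "pk A v (Suc n) = (if v ! n \<in> calls A then n # pk A v n
     else if v ! n \<in> rets A then tl (pk A v n) else pk A v n)"

definition Qp :: "'a vpalph \<Rightarrow> 'a list \<Rightarrow> nat \<Rightarrow> nat \<Rightarrow> bool" where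
  "Qp A v n i \<longleftrightarrow> i < n \<and> v ! i \<in> calls A \<and> run A (drop (Suc i) (take n v)) 0 \<noteq> None"

lemma H1:
  assumes "i < i'" "i' < n" "v ! i' \<in> calls A" "run A (drop (Suc i') (take n v)) 0 \<noteq> None"
    and "n \<le> length v"
  shows "run A (drop (Suc i) (take n v)) 0 \<noteq> Some 0"
proof -
  have eq: "drop (Suc i) (take n v) = drop (Suc i) (take i' v) @ v ! i' # drop (Suc i') (take n v)"
  proof -
    have "take n v = take i' v @ drop i' (take n v)"
      using assms(2) by (metis append_take_drop_id take_take min.absorb1 less_imp_le_nat)
    moreover have "drop i' (take n v) = v ! i' # drop (Suc i') (take n v)"
      using Cons_nth_drop_Suc[of i' "take n v"] assms by simp
    ultimately have "take n v = take i' v @ v ! i' # drop (Suc i') (take n v)" by simp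
    then have "drop (Suc i) (take n v) = drop (Suc i) (take i' v @ v ! i' # drop (Suc i') (take n v))" by (rule arg_cong)
    also have "\<dots> = drop (Suc i) (take i' v) @ v ! i' # drop (Suc i') (take n v)"
      using assms by simp
    finally show ?thesis .
  qed
  obtain d where d: "run A (drop (Suc i') (take n v)) 0 = Some d" using assms(4) by auto
  show ?thesis
  proof (cases "run A (drop (Suc i) (take i' v)) 0")
    case None then show ?thesis by (simp add: eq run_append)
  next
    case (Some a)
    then show ?thesis using assms(3) run_shift0[OF d, of "Suc a"] by (simp add: eq run_append)
  qed
qed

lemma pk_char:
  assumes "calls A \<inter> rets A = {}"
  shows "n \<le> length v \<Longrightarrow> set (pk A v n) = {i. Qp A v n i} \<and> sorted_wrt (>) (pk A v n)"
proof (induction n)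
  case 0 then show ?case by (simp add: Qp_def)
next
  case (Suc n)
  then have n: "n < length v" by simp
  have IH: "set (pk A v n) = {i. Qp A v n i}" "sorted_wrt (>) (pk A v n)" using Suc by auto
  have D: "drop (Suc i) (take (Suc n) v) = drop (Suc i) (take n v) @ [v ! n]" if "i < n" for i
    using n that by (simp add: take_Suc_conv_app_nth)
  show ?case
  proof (cases "v ! n \<in> calls A")
    case True
    have "set (pk A v (Suc n)) = {i. Qp A v (Suc n) i}"
    proof -
      have "Qp A v (Suc n) i \<longleftrightarrow> i = n \<or> Qp A v n i" for i
        using True D[of i] by (cases "i < n") (auto simp: Qp_def run_append less_Suc_eq split: option.splits)
      then show ?thesis using True IH by auto
    qed
    moreover have "sorted_wrt (>) (pk A v (Suc n))"
      using True IH by (auto simp: Qp_def)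
    ultimately show ?thesis by simp
  next
    case F: False
    show ?thesis
    proof (cases "v ! n \<in> rets A")
      case True
      have Q: "Qp A v (Suc n) i \<longleftrightarrow> Qp A v n i \<and> run A (drop (Suc i) (take n v)) 0 \<noteq> Some 0" for i
        using True F D[of i] by (cases "i < n") (auto simp: Qp_def run_append less_Suc_eq split: option.splits)
      have key: "i = hd (pk A v n) \<longleftrightarrow> run A (drop (Suc i) (take n v)) 0 = Some 0"
        if i: "i \<in> set (pk A v n)" for i
      proof
        assume ih: "i = hd (pk A v n)"
        obtain d where d: "run A (drop (Suc i) (take n v)) 0 = Some d" using i IH by (auto simp: Qp_def)
        show "run A (drop (Suc i) (take n v)) 0 = Some 0"
        proof (rule ccontr)
          assume "\<not> ?thesis"
          then have "0 < d" using d by auto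
          from run_decomp[OF d this] obtain k where k: "k < length (drop (Suc i) (take n v))"
            "drop (Suc i) (take n v) ! k \<in> calls A" "run A (drop (Suc k) (drop (Suc i) (take n v))) 0 = Some 0"
            by blast
          define i' where "i' = Suc i + k"
          have "i' < n" using k(1) n by (simp add: i'_def)
          moreover have "drop (Suc i) (take n v) ! k = take n v ! (Suc i + k)"
            using k(1) by (intro nth_drop) (simp add: min_def split: if_splits)
          then have "drop (Suc i) (take n v) ! k = v ! i'" using k(1) by (simp add: i'_def)
          then have "v ! i' \<in> calls A" using k(2) by simp
          moreover have "drop (Suc i') (take n v) = drop (Suc k) (drop (Suc i) (take n v))"
            by (simp add: i'_def add.commute)
          ultimately have "Qp A v n i'" using k(3) by (simp add: Qp_def)
          then have "i' \<in> set (pk A v n)" using IH by simp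
          moreover have "i' > i" by (simp add: i'_def)
          ultimately show False using ih IH(2) i
            by (cases "pk A v n") auto
        qed
      next
        assume r0: "run A (drop (Suc i) (take n v)) 0 = Some 0"
        show "i = hd (pk A v n)"
        proof (rule ccontr)
          assume ne: "i \<noteq> hd (pk A v n)"
          obtain h t where ht: "pk A v n = h # t" using i by (cases "pk A v n") auto
          then have "h > i" using ne i IH(2) by auto
          moreover have "Qp A v n h" using IH ht by auto
          ultimately show False using H1[of i h n v A] r0 n by (auto simp: Qp_def)
        qed
      qed
      have "set (pk A v (Suc n)) = {i. Qp A v (Suc n) i}"
      proof (cases "pk A v n")
        case Nil
        then show ?thesis using IH True F Q by auto
      next
        case (Cons h t)
        then have "h \<notin> set t" using IH(2) by auto
        then show ?thesis using IH True F Q key Cons by auto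
      qed
      moreover have "sorted_wrt (>) (pk A v (Suc n))"
        using True F IH by (cases "pk A v n") auto
      ultimately show ?thesis by simp
    next
      case False
      have "Qp A v (Suc n) i \<longleftrightarrow> Qp A v n i" for i
        using False F D[of i] by (cases "i < n") (auto simp: Qp_def run_append less_Suc_eq split: option.splits)
      then show ?thesis using False F IH by auto
    qed
  qed
qed

lemma pk_pending:
  assumes "calls A \<inter> rets A = {}" "n \<le> length v"
  shows "i \<in> set (pk A v n) \<longleftrightarrow> pending_call A (take n v) i"
  using pk_char[OF assms] pending_call_run[OF assms(1)] assms(2) by (auto simp: Qp_def)

lemma pk_sorted:
  assumes "calls A \<inter> rets A = {}" "n \<le> length v"
  shows "sorted_wrt (>) (pk A v n)"
  using pk_char[OF assms] by simp

lemma matched_pk: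
  assumes "calls A \<inter> rets A = {}" "matched A w i j"
  shows "pk A w j \<noteq> [] \<and> hd (pk A w j) = i"
proof -
  have jj: "i < j" "j < length w" "w ! i \<in> calls A" and b: "balanced A (drop (Suc i) (take j w))"
    using assms(2) by (auto simp: matched_def drop_take)
  have r0: "run A (drop (Suc i) (take j w)) 0 = Some 0" using balanced_run[OF assms(1) b] .
  have Q: "Qp A w j i" using jj r0 by (simp add: Qp_def)
  then have i: "i \<in> set (pk A w j)" using pk_char[OF assms(1), of j w] jj by auto
  then obtain h t where ht: "pk A w j = h # t" by (cases "pk A w j") auto
  have "h = i"
  proof (rule ccontr)
    assume "h \<noteq> i"
    then have "h > i" using i ht pk_sorted[OF assms(1), of j w] jj by auto
    moreover have "Qp A w j h" using pk_char[OF assms(1), of j w] jj ht by auto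
    ultimately show False using H1[of i h j w A] r0 jj by (auto simp: Qp_def)
  qed
  then show ?thesis using ht by simp
qed

definition ustep :: "'a vpalph \<Rightarrow> 'a list \<Rightarrow> 'a \<Rightarrow> 'a list" where
  "ustep A s x = (if x \<in> calls A then x # s else if x \<in> rets A then tl s else s)"

definition ustk :: "'a vpalph \<Rightarrow> 'a list \<Rightarrow> 'a list" where
  "ustk A v = foldl (ustep A) [] v"

lemma ustk_snoc: "ustk A (v @ [x]) = ustep A (ustk A v) x"
  by (simp add: ustk_def)

lemma ustk_Nil[simp]: "ustk A [] = []"
  by (simp add: ustk_def)

lemma map_pk: "n \<le> length v \<Longrightarrow> map ((!) v) (pk A v n) = ustk A (take n v)"
proof (induction n)
  case 0 then show ?case by simp
next
  case (Suc n)
  then have "take (Suc n) v = take n v @ [v ! n]" by (simp add: take_Suc_conv_app_nth)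
  then show ?case using Suc by (simp add: ustk_snoc ustep_def map_tl)
qed

lemma set_tl_sub: "set (tl xs) \<subseteq> set xs"
  by (cases xs) auto

lemma ustk_calls: "set (ustk A v) \<subseteq> calls A"
proof (induction v rule: rev_induct)
  case (snoc x v)
  then show ?case using set_tl_sub[of "ustk A v"] by (auto simp: ustk_snoc ustep_def)
qed simp

lemma well_matched_ustk:
  assumes "calls A \<inter> rets A = {}" "well_matched A v"
  shows "ustk A v = []"
proof (rule ccontr)
  assume "ustk A v \<noteq> []"
  then have "pk A v (length v) \<noteq> []" using map_pk[of "length v" v A] by auto
  then obtain i where "i \<in> set (pk A v (length v))" by (cases "pk A v (length v)") auto
  then have "pending_call A v i" using pk_pending[OF assms(1), of "length v" v] by simp
  then show False using assms(2) by (simp add: well_matched_def)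
qed


lemma vp_union_comm: "vp_union A B = vp_union B A"
  by (simp add: vp_union_def Un_commute)

lemma calls_union[simp]: "calls (vp_union A B) = calls A \<union> calls B"
  and rets_union[simp]: "rets (vp_union A B) = rets A \<union> rets B"
  and ints_union[simp]: "ints (vp_union A B) = ints A \<union> ints B"
  by (simp_all add: vp_union_def calls_def rets_def ints_def)

lemma letters_union[simp]: "letters (vp_union A B) = letters A \<union> letters B"
  by (auto simp: letters_def)

lemma calls_letters: "calls A \<subseteq> letters A" and rets_letters: "rets A \<subseteq> letters A"
  and ints_letters: "ints A \<subseteq> letters A"
  by (auto simp: letters_def)

lemma strict_total_asym:
  "strict_total_on S r \<Longrightarrow> x \<in> S \<Longrightarrow> y \<in> S \<Longrightarrow> r x y \<Longrightarrow> \<not> r y x"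
  unfolding strict_total_on_def by blast

lemma strict_total_tot:
  "strict_total_on S r \<Longrightarrow> x \<in> S \<Longrightarrow> y \<in> S \<Longrightarrow> x \<noteq> y \<Longrightarrow> \<not> r x y \<Longrightarrow> r y x"
  unfolding strict_total_on_def by blast

lemma strict_total_irr:
  "strict_total_on S r \<Longrightarrow> x \<in> S \<Longrightarrow> \<not> r x x"
  unfolding strict_total_on_def by blast

definition OB :: "'a set \<Rightarrow> ('a list \<Rightarrow> 'a \<Rightarrow> 'a \<Rightarrow> bool) \<Rightarrow> 'a vpalph \<Rightarrow> 'a list \<Rightarrow> 'a set" where
  "OB L prec B al = {b \<in> L. \<forall>k<length al. al ! k \<notin> letters B \<and>
      (\<forall>l. k < l \<and> l < length al \<longrightarrow> al ! l \<notin> letters B) \<longrightarrow> prec (take k al) (al ! k) b}"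

definition LocW :: "'a vpalph \<Rightarrow> 'a vpalph \<Rightarrow> ('a list \<Rightarrow> 'a \<Rightarrow> 'a \<Rightarrow> bool) \<Rightarrow> 'a list \<Rightarrow> bool" where
  "LocW A1 A2 prec w \<longleftrightarrow> (\<forall>m<length w.
     (w ! m \<in> letters A1 \<longrightarrow> w ! m \<in> OB (letters (vp_union A1 A2)) prec A1 (take m w)) \<and>
     (w ! m \<in> letters A2 \<longrightarrow> w ! m \<in> OB (letters (vp_union A1 A2)) prec A2 (take m w)))"

lemma LocW_comm: "LocW A2 A1 prec w = LocW A1 A2 prec w"
  unfolding LocW_def by (metis vp_union_comm)

lemma OB_Nil[simp]: "OB L prec B [] = L"
  by (auto simp: OB_def)

lemma OB_snoc_in: "x \<in> letters B \<Longrightarrow> OB L prec B (al @ [x]) = L"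
  unfolding OB_def
  by (auto simp: nth_append less_Suc_eq)

lemma OB_snoc_out: "x \<notin> letters B \<Longrightarrow> OB L prec B (al @ [x]) = OB L prec B al \<inter> {b. prec al x b}"
proof -
  assume x: "x \<notin> letters B"
  show ?thesis
  proof (intro set_eqI iffI)
    fix b assume b: "b \<in> OB L prec B (al @ [x])"
    have "prec al x b" using b x unfolding OB_def by (auto elim!: allE[of _ "length al"])
    moreover have "b \<in> OB L prec B al"
      unfolding OB_def
    proof (intro CollectI conjI allI impI)
      show "b \<in> L" using b by (simp add: OB_def)
      fix k assume k: "k < length al" "al ! k \<notin> letters B \<and> (\<forall>l. k < l \<and> l < length al \<longrightarrow> al ! l \<notin> letters B)"
      then have "(al @ [x]) ! k \<notin> letters B \<and> (\<forall>l. k < l \<and> l < length (al @ [x]) \<longrightarrow> (al @ [x]) ! l \<notin> letters B)"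
        using x by (auto simp: nth_append less_Suc_eq)
      moreover have H: "\<And>k. k < length (al @ [x]) \<Longrightarrow> (al @ [x]) ! k \<notin> letters B \<and>
          (\<forall>l. k < l \<and> l < length (al @ [x]) \<longrightarrow> (al @ [x]) ! l \<notin> letters B) \<Longrightarrow>
          prec (take k (al @ [x])) ((al @ [x]) ! k) b" using b unfolding OB_def by blast
      moreover have "k < length (al @ [x])" using k(1) by simp
      ultimately have "prec (take k (al @ [x])) ((al @ [x]) ! k) b" by blast
      then show "prec (take k al) (al ! k) b" using k(1) by (simp add: nth_append)
    qed
    ultimately show "b \<in> OB L prec B al \<inter> {b. prec al x b}" by simp
  next
    fix b assume b: "b \<in> OB L prec B al \<inter> {b. prec al x b}"
    show "b \<in> OB L prec B (al @ [x])"
      unfolding OB_def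
    proof (intro CollectI conjI allI impI)
      show "b \<in> L" using b by (simp add: OB_def)
      fix k assume k: "k < length (al @ [x])" "(al @ [x]) ! k \<notin> letters B \<and> (\<forall>l. k < l \<and> l < length (al @ [x]) \<longrightarrow> (al @ [x]) ! l \<notin> letters B)"
      show "prec (take k (al @ [x])) ((al @ [x]) ! k) b"
      proof (cases "k = length al")
        case True then show ?thesis using b by simp
      next
        case False
        then have kk: "k < length al" using k(1) by simp
        have "al ! k \<notin> letters B \<and> (\<forall>l. k < l \<and> l < length al \<longrightarrow> al ! l \<notin> letters B)"
          using k(2) kk by (auto simp: nth_append)
        then show ?thesis using b kk unfolding OB_def by (auto simp: nth_append)
      qed
    qed
  qed
qed


definition F :: "'a vpalph \<Rightarrow> 'a list \<Rightarrow> 'a list" where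
  "F B w = filter (\<lambda>x. x \<in> letters B) w"

lemma swap_filter:
  assumes "letters A1 \<inter> letters A2 = {}" "swap_step A1 A2 u w" "B = A1 \<or> B = A2"
  shows "F B u = F B w" "set u = set w"
  using assms unfolding swap_step_def indep_def F_def by auto

lemma equivI_filter:
  assumes "letters A1 \<inter> letters A2 = {}" "equivI A1 A2 u w" "B = A1 \<or> B = A2"
  shows "F B u = F B w \<and> set u = set w"
  using assms(2) unfolding equivI_def
proof (induction rule: rtranclp_induct)
  case (step y z)
  then show ?case using swap_filter[OF assms(1) _ assms(3)] by metis
qed simp

lemma equivI_move:
  assumes "\<forall>x\<in>set be. indep A1 A2 y x"
  shows "equivI A1 A2 (al @ y # be @ ga) (al @ be @ y # ga)"
  using assms
proof (induction be arbitrary: al)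
  case Nil then show ?case by (simp add: equivI_def)
next
  case (Cons b be)
  have "swap_step A1 A2 (al @ y # b # be @ ga) ((al @ [b]) @ y # be @ ga)"
    unfolding swap_step_def using Cons.prems by (intro exI[of _ al] exI[of _ y] exI[of _ b] exI[of _ "be @ ga"]) auto
  moreover have "equivI A1 A2 ((al @ [b]) @ y # be @ ga) ((al @ [b]) @ be @ y # ga)"
    using Cons.IH[of "al @ [b]"] Cons.prems by simp
  ultimately show ?case unfolding equivI_def
    by (simp add: converse_rtranclp_into_rtranclp)
qed

lemma length_F:
  assumes "letters A1 \<inter> letters A2 = {}" "w \<in> lists (letters (vp_union A1 A2))"
  shows "length w = length (F A1 w) + length (F A2 w)"
  using assms(2)
proof (induction w)
  case (Cons x w)
  then show ?case using assms(1) by (auto simp: F_def)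
qed (simp add: F_def)

locale setting =
  fixes A1 A2 :: "'a vpalph" and prec :: "'a list \<Rightarrow> 'a \<Rightarrow> 'a \<Rightarrow> bool"
  assumes va1: "vp_alphabet A1" and va2: "vp_alphabet A2"
    and disj: "letters A1 \<inter> letters A2 = {}"
    and co: "contextual_order (vp_union A1 A2) prec"
begin

abbreviation "U \<equiv> vp_union A1 A2"
abbreviation "L \<equiv> letters (vp_union A1 A2)"

lemma st: "al \<in> lists L \<Longrightarrow> strict_total_on L (prec al)"
  using co by (simp add: contextual_order_def)

lemma indepI: "B = A1 \<or> B = A2 \<Longrightarrow> x \<in> letters B \<Longrightarrow> y \<in> L \<Longrightarrow> y \<notin> letters B \<Longrightarrow> indep A1 A2 x y"
  unfolding indep_def using disj by auto

lemma shuffle_F: "w \<in> shuffle A1 A2 P1 P2 \<longleftrightarrow> w \<in> lists L \<and> F A1 w \<in> P1 \<and> F A2 w \<in> P2"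
  by (simp add: shuffle_def F_def)

lemma red_sub:
  assumes w: "w \<in> red A1 A2 prec (shuffle A1 A2 P1 P2)" and B: "B = A1 \<or> B = A2"
    and m: "m < length w" "w ! m \<in> letters B"
  shows "w ! m \<in> OB L prec B (take m w)"
proof (rule ccontr)
  assume nob: "w ! m \<notin> OB L prec B (take m w)"
  have ws: "w \<in> shuffle A1 A2 P1 P2" using w by (simp add: red_def)
  then have wL: "w \<in> lists L" by (simp add: shuffle_F)
  then have ymL: "w ! m \<in> L" using m(1) by (meson in_listsD nth_mem)
  then obtain k where k: "k < m" "w ! k \<notin> letters B" "\<forall>l. k < l \<and> l < m \<longrightarrow> w ! l \<notin> letters B"
    and np: "\<not> prec (take k w) (w ! k) (w ! m)"
    using nob m(1) unfolding OB_def by (auto simp: min_def split: if_splits)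
  define al where "al = take k w"
  define be where "be = drop k (take m w)"
  define ga where "ga = drop (Suc m) w"
  have weq: "w = al @ be @ w ! m # ga"
    unfolding al_def be_def ga_def using k(1) m(1) by (metis append.assoc append_take_drop_id id_take_nth_drop less_imp_le_nat take_take min.absorb1)
  define u where "u = al @ w ! m # be @ ga"
  have beL: "\<forall>x\<in>set be. indep A1 A2 (w ! m) x"
  proof
    fix x assume "x \<in> set be"
    then obtain l where l: "l < length be" "x = be ! l" by (auto simp: in_set_conv_nth)
    then have "x = w ! (k + l)" "k < k + l \<or> l = 0" "k + l < m" using k(1) m(1)
      by (auto simp: be_def)
    then have "x \<notin> letters B" using k by (cases "l = 0") auto
    moreover have "x \<in> L" using \<open>x \<in> set be\<close> wL by (auto simp: be_def dest: in_set_dropD in_set_takeD)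
    ultimately show "indep A1 A2 (w ! m) x" using indepI[OF B m(2)] by blast
  qed
  have eq: "equivI A1 A2 u w"
    using equivI_move[OF beL, of al ga] weq by (simp add: u_def)
  have us: "u \<in> shuffle A1 A2 P1 P2"
    using equivI_filter[OF disj eq] ws wL unfolding shuffle_F by (metis in_lists_conv_set)
  have wk: "w ! k \<in> L" using wL k(1) m(1) by (meson in_listsD nth_mem less_trans)
  have alL: "al \<in> lists L" using wL by (auto simp: al_def dest: in_set_takeD)
  have ne: "w ! k \<noteq> w ! m" using k(2) m(2) by auto
  have pr: "prec al (w ! m) (w ! k)"
    using strict_total_tot[OF st[OF alL] wk ymL ne] np by (simp add: al_def)
  have w2: "w = al @ w ! k # drop (Suc k) w"
    unfolding al_def using k(1) m(1) by (simp add: id_take_nth_drop)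
  have "ctx_le prec u w"
    unfolding ctx_le_def using pr w2 by (intro disjI2 exI[of _ al] exI[of _ "w ! m"] exI[of _ "be @ ga"] exI[of _ "w ! k"] exI[of _ "drop (Suc k) w"]) (simp add: u_def)
  then have "u = w" using w us eq by (auto simp: red_def)
  moreover have "length al = k" using k(1) m(1) by (auto simp: al_def)
  moreover have "u ! length al = w ! m" by (simp add: u_def nth_append)
  ultimately show False using ne by simp
qed

lemma red_sup:
  assumes ws: "w \<in> shuffle A1 A2 P1 P2" and lw: "LocW A1 A2 prec w"
  shows "w \<in> red A1 A2 prec (shuffle A1 A2 P1 P2)"
  unfolding red_def
proof (intro CollectI conjI ballI impI ws)
  fix u assume us: "u \<in> shuffle A1 A2 P1 P2" and h: "equivI A1 A2 u w \<and> ctx_le prec u w"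
  have wL: "w \<in> lists L" and uL: "u \<in> lists L" using ws us by (auto simp: shuffle_F)
  have f1: "F A1 u = F A1 w" and f2: "F A2 u = F A2 w"
    using equivI_filter[OF disj, of u w] h by auto
  have len: "length u = length w"
    using length_F[OF disj wL] length_F[OF disj uL] f1 f2 by simp
  consider (pre) t where "w = u @ t"
    | (lex) al a be b ga where "u = al @ a # be" "w = al @ b # ga" "prec al a b"
    using h unfolding ctx_le_def by blast
  then show "u = w"
  proof cases
    case pre then show ?thesis using len by simp
  next
    case lex
    have alL: "al \<in> lists L" and aL: "a \<in> L" and bL: "b \<in> L" using lex uL wL by auto
    obtain B where B: "B = A1 \<or> B = A2" "a \<in> letters B" using aL by (metis UnE letters_union)
    have fB: "F B u = F B w" using B(1) f1 f2 by auto
    then have fB': "F B (a # be) = F B (b # ga)" using lex by (simp add: F_def)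
    show ?thesis
    proof (cases "b \<in> letters B")
      case True
      then have "a = b" using fB' B(2) by (simp add: F_def)
      then show ?thesis using lex strict_total_irr[OF st[OF alL] aL] by simp
    next
      case False
      then have "filter (\<lambda>x. x \<in> letters B) ga = a # F B be" using fB' B(2) by (simp add: F_def)
      then obtain g1 g2 where g: "ga = g1 @ a # g2" "\<forall>x\<in>set g1. x \<notin> letters B"
        using filter_eq_ConsD by metis
      define m where "m = Suc (length al + length g1)"
      have wm: "w ! m = a" "take m w = al @ b # g1" "m < length w"
        using lex g by (auto simp: m_def nth_append)
      have "w ! m \<in> OB L prec B (take m w)"
        using lw wm(3) B unfolding LocW_def by (metis wm(1))
      then have ob: "a \<in> OB L prec B (al @ b # g1)" using wm by simp
      have nb1: "(al @ b # g1) ! length al \<notin> letters B" using False by simp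
      have nb2: "\<forall>l. length al < l \<and> l < length (al @ b # g1) \<longrightarrow> (al @ b # g1) ! l \<notin> letters B"
      proof (intro allI impI)
        fix l assume l: "length al < l \<and> l < length (al @ b # g1)"
        then have "(al @ b # g1) ! l = g1 ! (l - Suc (length al))"
          by (simp add: nth_append nth_Cons' )
        moreover have "l - Suc (length al) < length g1" using l by auto
        ultimately show "(al @ b # g1) ! l \<notin> letters B" using g(2) by (metis nth_mem)
      qed
      have H: "\<And>k. k < length (al @ b # g1) \<Longrightarrow> (al @ b # g1) ! k \<notin> letters B \<and>
          (\<forall>l. k < l \<and> l < length (al @ b # g1) \<longrightarrow> (al @ b # g1) ! l \<notin> letters B) \<Longrightarrow>
          prec (take k (al @ b # g1)) ((al @ b # g1) ! k) a" using ob unfolding OB_def by blast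
      have c1: "length al < length (al @ b # g1)" by simp
      have "prec (take (length al) (al @ b # g1)) ((al @ b # g1) ! length al) a"
        by (rule H[OF c1 conjI[OF nb1 nb2]])
      then have "prec al b a" by simp
      then show ?thesis using strict_total_asym[OF st[OF alL] aL bL] lex by blast
    qed
  qed
qed

lemma red_char: "red A1 A2 prec (shuffle A1 A2 P1 P2) = {w \<in> shuffle A1 A2 P1 P2. LocW A1 A2 prec w}"
proof (intro set_eqI iffI)
  fix w assume w: "w \<in> red A1 A2 prec (shuffle A1 A2 P1 P2)"
  then show "w \<in> {w \<in> shuffle A1 A2 P1 P2. LocW A1 A2 prec w}"
    using red_sub[OF w] by (auto simp: red_def LocW_def)
next
  fix w assume "w \<in> {w \<in> shuffle A1 A2 P1 P2. LocW A1 A2 prec w}"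
  then show "w \<in> red A1 A2 prec (shuffle A1 A2 P1 P2)" using red_sup by blast
qed

end


context setting
begin

lemma cr1: "calls A1 \<inter> rets A1 = {}" and cr2: "calls A2 \<inter> rets A2 = {}"
  and ci1: "calls A1 \<inter> ints A1 = {}" and ci2: "calls A2 \<inter> ints A2 = {}"
  and ri1: "rets A1 \<inter> ints A1 = {}" and ri2: "rets A2 \<inter> ints A2 = {}"
  using va1 va2 by (auto simp: vp_alphabet_def)

lemma crU: "calls U \<inter> rets U = {}"
  using cr1 cr2 disj calls_letters[of A1] calls_letters[of A2] rets_letters[of A1] rets_letters[of A2]
  by auto

lemma memB:
  assumes "B = A1 \<or> B = A2" "x \<in> letters B"
  shows "x \<in> calls U \<longleftrightarrow> x \<in> calls B" "x \<in> rets U \<longleftrightarrow> x \<in> rets B"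
  using assms disj calls_letters[of A1] calls_letters[of A2] rets_letters[of A1] rets_letters[of A2]
  by auto

lemma FS:
  assumes wL: "w \<in> lists L" and B: "B = A1 \<or> B = A2"
  shows "j \<le> length w \<Longrightarrow> (\<forall>j'<j. w ! j' \<in> rets U \<longrightarrow> (ustk U (take j' w) = [] \<or>
           (hd (ustk U (take j' w)) \<in> letters A1 \<longleftrightarrow> w ! j' \<in> letters A1)))
         \<Longrightarrow> F B (ustk U (take j w)) = ustk B (F B (take j w))"
proof (induction j)
  case 0 then show ?case by (simp add: F_def)
next
  case (Suc j)
  define x where "x = w ! j"
  define s where "s = ustk U (take j w)"
  have tk: "take (Suc j) w = take j w @ [x]" using Suc.prems(1) by (simp add: x_def take_Suc_conv_app_nth)
  have IH: "F B s = ustk B (F B (take j w))" using Suc by (simp add: s_def)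
  have xL: "x \<in> L" using wL Suc.prems(1) unfolding x_def by (meson in_listsD nth_mem Suc_le_lessD)
  have good: "x \<in> rets U \<Longrightarrow> s = [] \<or> (hd s \<in> letters A1 \<longleftrightarrow> x \<in> letters A1)"
    using Suc.prems(2) lessI[of j] unfolding s_def x_def by blast
  have sL: "set s \<subseteq> L" using ustk_calls[of U "take j w"] calls_letters[of U] unfolding s_def by blast
  have lhs: "ustk U (take (Suc j) w) = ustep U s x" by (simp add: tk ustk_snoc s_def)
  show ?case
  proof (cases "x \<in> letters B")
    case True
    have rhs: "F B (take (Suc j) w) = F B (take j w) @ [x]" using True by (simp add: tk F_def)
    have cU: "x \<in> calls U \<longleftrightarrow> x \<in> calls B" and rU: "x \<in> rets U \<longleftrightarrow> x \<in> rets B"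
      using memB[OF B True] by auto
    show ?thesis
    proof (cases "x \<in> calls U")
      case True
      then show ?thesis using lhs rhs IH cU \<open>x \<in> letters B\<close> by (simp add: ustk_snoc ustep_def F_def)
    next
      case nc: False
      show ?thesis
      proof (cases "x \<in> rets U")
        case True
        have "F B (tl s) = tl (F B s)"
        proof (cases s)
          case (Cons h t)
          then have "hd s \<in> letters A1 \<longleftrightarrow> x \<in> letters A1" using good True by simp
          moreover have "h \<in> L" using sL Cons by simp
          ultimately have "h \<in> letters B" using B \<open>x \<in> letters B\<close> disj Cons by auto
          then show ?thesis using Cons by (simp add: F_def)
        qed (simp add: F_def)
        then show ?thesis using lhs rhs IH cU rU nc True by (simp add: ustk_snoc ustep_def)
      next
        case False
        then show ?thesis using lhs rhs IH cU rU nc by (simp add: ustk_snoc ustep_def)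
      qed
    qed
  next
    case False
    have rhs: "F B (take (Suc j) w) = F B (take j w)" using False by (simp add: tk F_def)
    have "F B (ustep U s x) = F B s"
    proof (cases "x \<in> calls U")
      case True then show ?thesis using False by (simp add: ustep_def F_def)
    next
      case nc: False
      show ?thesis
      proof (cases "x \<in> rets U")
        case True
        show ?thesis
        proof (cases s)
          case (Cons h t)
          then have "hd s \<in> letters A1 \<longleftrightarrow> x \<in> letters A1" using good True by simp
          moreover have "h \<in> L" using sL Cons by simp
          ultimately have "h \<notin> letters B" using B False xL disj Cons by auto
          then show ?thesis using Cons True nc by (simp add: F_def ustep_def)
        qed (use True nc in \<open>simp add: ustep_def\<close>)
      next
        case False then show ?thesis using nc by (simp add: ustep_def)
      qed
    qed
    then show ?thesis using lhs rhs IH by simp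
  qed
qed

lemma cross_contra:
  assumes wL: "w \<in> lists L" and wm2: "well_matched A2 (F A2 w)" and lw: "LocW A1 A2 prec w"
    and coh: "coherent1 A2 A1 prec"
    and j: "j < length w" and r: "w ! j \<in> rets U" and r1: "w ! j \<in> letters A1"
    and stk: "ustk U (take j w) = c # t" and c2: "c \<in> letters A2"
    and fs: "F A2 (ustk U (take j w)) = ustk A2 (F A2 (take j w))"
  shows False
proof -
  have cU: "c \<in> calls U" using ustk_calls[of U "take j w"] stk by auto
  have nA2: "w ! j \<notin> letters A2" using r1 disj by auto
  have "F A2 (c # t) \<noteq> []" using c2 by (simp add: F_def)
  then have ne: "ustk A2 (F A2 (take j w)) \<noteq> []" using fs stk by metis
  have "\<exists>x\<in>set (drop (Suc j) w). x \<in> letters A2"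
  proof (rule ccontr)
    assume "\<not> ?thesis"
    then have e: "F A2 (drop (Suc j) w) = []" by (simp add: F_def filter_empty_conv)
    have "w = take j w @ w ! j # drop (Suc j) w" using j by (simp add: id_take_nth_drop)
    then have "F A2 w = F A2 (take j w) @ F A2 (w ! j # drop (Suc j) w)" by (metis F_def filter_append)
    then have "F A2 w = F A2 (take j w)" using e nA2 by (simp add: F_def)
    then show False using well_matched_ustk[OF cr2 wm2] ne by simp
  qed
  then obtain p y q where pyq: "drop (Suc j) w = p @ y # q" "y \<in> letters A2" "\<forall>z\<in>set p. z \<notin> letters A2"
    using split_list_first_prop[of "drop (Suc j) w" "\<lambda>x. x \<in> letters A2"] by blast
  define m where "m = Suc j + length p"
  have wsplit: "w = take j w @ w ! j # p @ y # q"
    using j pyq(1) by (metis id_take_nth_drop)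
  have lenj: "length (take j w) = j" using j by simp
  have wm: "w ! m = y" "m < length w" "take m w = take j w @ w ! j # p"
  proof -
    have "w ! m = (take j w @ w ! j # p @ y # q) ! m" using wsplit by metis
    then show "w ! m = y" using lenj by (simp add: m_def nth_append)
    have "length w = length (take j w @ w ! j # p @ y # q)" using wsplit by metis
    then show "m < length w" using lenj by (simp add: m_def)
    have "take m w = take m (take j w @ w ! j # p @ y # q)" using wsplit by metis
    then show "take m w = take j w @ w ! j # p" using lenj by (simp add: m_def)
  qed
  have ob: "y \<in> OB L prec A2 (take j w @ w ! j # p)"
    using lw wm pyq(2) unfolding LocW_def by metis
  define al where "al = take j w @ w ! j # p"
  have H: "\<And>k. k < length al \<Longrightarrow> al ! k \<notin> letters A2 \<and>
          (\<forall>l. k < l \<and> l < length al \<longrightarrow> al ! l \<notin> letters A2) \<Longrightarrow>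
          prec (take k al) (al ! k) y" using ob unfolding OB_def al_def by blast
  have c1: "j < length al" using lenj by (simp add: al_def)
  have nb1: "al ! j \<notin> letters A2" using nA2 lenj by (simp add: al_def nth_append)
  have nb2: "\<forall>l. j < l \<and> l < length al \<longrightarrow> al ! l \<notin> letters A2"
  proof (intro allI impI)
    fix l assume l: "j < l \<and> l < length al"
    then have "al ! l = p ! (l - Suc j)" using lenj by (simp add: al_def nth_append)
    moreover have "l - Suc j < length p" using l lenj by (auto simp: al_def)
    ultimately show "al ! l \<notin> letters A2" using pyq(3) by (metis nth_mem)
  qed
  have "prec (take j al) (al ! j) y" by (rule H[OF c1 conjI[OF nb1 nb2]])
  then have p1: "prec (take j w) (w ! j) y" using lenj by (simp add: al_def nth_append)
  have pkne: "pk U w j \<noteq> []" using map_pk[of j w U] j stk by auto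
  define i where "i = hd (pk U w j)"
  have iin: "i \<in> set (pk U w j)" using pkne by (simp add: i_def)
  have pend: "pending_call (vp_union A2 A1) (take j w) i"
    using pk_pending[OF crU, of j w i] iin j by (simp add: vp_union_comm)
  have mx: "\<forall>k. pending_call (vp_union A2 A1) (take j w) k \<longrightarrow> k \<le> i"
  proof (intro allI impI)
    fix k assume "pending_call (vp_union A2 A1) (take j w) k"
    then have "k \<in> set (pk U w j)" using pk_pending[OF crU, of j w k] j by (simp add: vp_union_comm)
    moreover have "sorted_wrt (>) (pk U w j)" using pk_sorted[OF crU, of j w] j by simp
    ultimately show "k \<le> i" using pkne unfolding i_def by (cases "pk U w j") auto
  qed
  have "(take j w) ! i = c"
  proof -
    have "map ((!) w) (pk U w j) = c # t" using map_pk[of j w U] j stk by simp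
    then have "w ! i = c" using pkne by (cases "pk U w j") (auto simp: i_def)
    moreover have "i < j" using pend by (simp add: pending_call_def)
    ultimately show ?thesis by simp
  qed
  then have ci: "(take j w) ! i \<in> calls A2" using memB[of A2 c] cU c2 by auto
  have tL: "take j w \<in> lists (letters (vp_union A2 A1))"
    using wL by (auto simp: vp_union_comm dest: in_set_takeD)
  have "\<forall>a \<in> letters A2. \<forall>r \<in> rets A1. prec (take j w) a r"
    using coh tL pend mx ci unfolding coherent1_def by blast
  moreover have "w ! j \<in> rets A1" using memB[of A1 "w ! j"] r r1 by auto
  ultimately have p2: "prec (take j w) y (w ! j)" using pyq(2) by blast
  have tL': "take j w \<in> lists L" using wL by (auto dest: in_set_takeD)
  have "y \<in> L" "w ! j \<in> L" using pyq(2) r1 by auto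
  then show False using strict_total_asym[OF st[OF tL']] p1 p2 by blast
qed

lemma core:
  assumes wL: "w \<in> lists L" and wm1: "well_matched A1 (F A1 w)" and wm2: "well_matched A2 (F A2 w)"
    and lw: "LocW A1 A2 prec w" and coh: "coherent A1 A2 prec"
  shows "j < length w \<Longrightarrow> w ! j \<in> rets U \<Longrightarrow> ustk U (take j w) = [] \<or>
           (hd (ustk U (take j w)) \<in> letters A1 \<longleftrightarrow> w ! j \<in> letters A1)"
proof (induction j rule: less_induct)
  case (less j)
  have good: "\<forall>j'<j. w ! j' \<in> rets U \<longrightarrow> (ustk U (take j' w) = [] \<or>
           (hd (ustk U (take j' w)) \<in> letters A1 \<longleftrightarrow> w ! j' \<in> letters A1))"
    using less.IH less.prems(1) by auto
  have jle: "j \<le> length w" using less.prems(1) by simp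
  show ?case
  proof (rule ccontr)
    assume nc: "\<not> ?case"
    then obtain c t where stk: "ustk U (take j w) = c # t" by (cases "ustk U (take j w)") auto
    have cU: "c \<in> calls U" using ustk_calls[of U "take j w"] stk by auto
    then have cL: "c \<in> L" using calls_letters[of U] by blast
    have mis: "\<not> (c \<in> letters A1 \<longleftrightarrow> w ! j \<in> letters A1)" using nc stk by simp
    have wjL: "w ! j \<in> L" using wL less.prems(1) by (meson in_listsD nth_mem)
    show False
    proof (cases "c \<in> letters A1")
      case False
      then have c2: "c \<in> letters A2" using cL by simp
      have r1: "w ! j \<in> letters A1" using mis False by simp
      have fs: "F A2 (ustk U (take j w)) = ustk A2 (F A2 (take j w))"
        using FS[OF wL _ jle good] by simp
      show False
        using cross_contra[OF wL wm2 lw _ less.prems(1) less.prems(2) r1 stk c2 fs] coh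
        by (simp add: coherent_def)
    next
      case True
      have r2: "w ! j \<in> letters A2" using mis True wjL by simp
      have fs: "F A1 (ustk U (take j w)) = ustk A1 (F A1 (take j w))"
        using FS[OF wL _ jle good] by simp
      have swe: "vp_union A2 A1 = vp_union A1 A2" by (rule vp_union_comm)
      interpret sw: setting A2 A1 prec
        using va1 va2 disj co by unfold_locales (auto simp: swe)
      have X: "False"
        if "w \<in> lists (letters (vp_union A2 A1))" "w ! j \<in> rets (vp_union A2 A1)"
           "ustk (vp_union A2 A1) (take j w) = c # t"
           "F A1 (ustk (vp_union A2 A1) (take j w)) = ustk A1 (F A1 (take j w))"
        using sw.cross_contra[OF that(1) wm1 _ _ less.prems(1) that(2) r2 that(3) True that(4)]
          lw coh LocW_comm[of A1 A2 prec w] by (simp add: coherent_def)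
      show False by (rule X) (use wL less.prems(2) stk fs swe in auto)
    qed
  qed
qed

lemma red_well_nested:
  assumes w: "w \<in> red A1 A2 prec (shuffle A1 A2 P1 P2)"
    and wm: "\<forall>w \<in> P1. well_matched A1 w" "\<forall>w \<in> P2. well_matched A2 w"
    and coh: "coherent A1 A2 prec"
  shows "well_nested A1 A2 w"
  unfolding well_nested_def
proof (intro allI impI)
  fix i j assume m: "matched U w i j"
  have ws: "w \<in> shuffle A1 A2 P1 P2" and lw: "LocW A1 A2 prec w" using w red_char by auto
  then have wL: "w \<in> lists L" and f1: "F A1 w \<in> P1" and f2: "F A2 w \<in> P2" by (auto simp: shuffle_F)
  have jj: "j < length w" "w ! j \<in> rets U" "i < j" using m by (auto simp: matched_def)
  have pk: "pk U w j \<noteq> [] \<and> hd (pk U w j) = i" using matched_pk[OF crU m] .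
  have "ustk U (take j w) = map ((!) w) (pk U w j)" using map_pk[of j w U] jj by simp
  then have hs: "ustk U (take j w) \<noteq> [] \<and> hd (ustk U (take j w)) = w ! i" using pk
    by (cases "pk U w j") auto
  have "w ! i \<in> letters A1 \<longleftrightarrow> w ! j \<in> letters A1"
    using core[OF wL _ _ lw coh jj(1) jj(2)] wm f1 f2 hs by auto
  moreover have "w ! i \<in> L" "w ! j \<in> L" using wL jj by (meson in_listsD nth_mem less_trans)+
  ultimately show "(w ! i \<in> letters A1 \<and> w ! j \<in> letters A1) \<or> (w ! i \<in> letters A2 \<and> w ! j \<in> letters A2)"
    by auto
qed

end


record ('a, 's, 'g) gvpa =
  gst :: "'s set"
  ginit :: "'s set"
  gfin :: "'s set"
  ggam :: "'g set"
  gcall :: "('s \<times> 'a \<times> 's \<times> 'g) set"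
  gret :: "('s \<times> 'a \<times> 'g option \<times> 's) set"
  gint :: "('s \<times> 'a \<times> 's) set"

definition gvpa_wf :: "'a vpalph \<Rightarrow> ('a, 's, 'g) gvpa \<Rightarrow> bool" where
  "gvpa_wf A M \<longleftrightarrow> finite (gst M) \<and> finite (ggam M) \<and> ginit M \<subseteq> gst M \<and> gfin M \<subseteq> gst M \<and>
     (\<forall>(q,a,q',g) \<in> gcall M. q \<in> gst M \<and> a \<in> calls A \<and> q' \<in> gst M \<and> g \<in> ggam M) \<and>
     (\<forall>(q,a,g,q') \<in> gret M. q \<in> gst M \<and> a \<in> rets A \<and> q' \<in> gst M \<and> (\<forall>x. g = Some x \<longrightarrow> x \<in> ggam M)) \<and>
     (\<forall>(q,a,q') \<in> gint M. q \<in> gst M \<and> a \<in> ints A \<and> q' \<in> gst M)"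

definition gstep :: "'a vpalph \<Rightarrow> ('a, 's, 'g) gvpa \<Rightarrow> 's \<times> 'g list \<Rightarrow> 'a \<Rightarrow> 's \<times> 'g list \<Rightarrow> bool" where
  "gstep A M c a c' \<longleftrightarrow>
    (case c of (q, s) \<Rightarrow> case c' of (q', s') \<Rightarrow>
      (a \<in> calls A \<and> (\<exists>g. (q, a, q', g) \<in> gcall M \<and> s' = g # s)) \<or>
      (a \<in> rets A \<and> ((s = [] \<and> s' = [] \<and> (q, a, None, q') \<in> gret M) \<or>
                     (\<exists>g. s = g # s' \<and> (q, a, Some g, q') \<in> gret M))) \<or>
      (a \<in> ints A \<and> (q, a, q') \<in> gint M \<and> s' = s))"

fun greach :: "'a vpalph \<Rightarrow> ('a, 's, 'g) gvpa \<Rightarrow> 's \<times> 'g list \<Rightarrow> 'a list \<Rightarrow> 's \<times> 'g list \<Rightarrow> bool" where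
  "greach A M c [] c' \<longleftrightarrow> c' = c"
| "greach A M c (a # w) c' \<longleftrightarrow> (\<exists>c''. gstep A M c a c'' \<and> greach A M c'' w c')"

definition glang :: "'a vpalph \<Rightarrow> ('a, 's, 'g) gvpa \<Rightarrow> 'a list set" where
  "glang A M = {w. \<exists>q0 \<in> ginit M. \<exists>q s. greach A M (q0, []) w (q, s) \<and> q \<in> gfin M}"

definition encM :: "('s \<Rightarrow> nat) \<Rightarrow> ('g \<Rightarrow> nat) \<Rightarrow> ('a, 's, 'g) gvpa \<Rightarrow> 'a vpa" where
  "encM f g G = \<lparr>st = f ` gst G, init = f ` ginit G, fin = f ` gfin G, gam = g ` ggam G,
     dcall = (\<lambda>(q,a,q',x). (f q, a, f q', g x)) ` gcall G,
     dret = (\<lambda>(q,a,oo,q'). (f q, a, map_option g oo, f q')) ` gret G,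
     dint = (\<lambda>(q,a,q'). (f q, a, f q')) ` gint G\<rparr>"

lemma encM_call: "(q,a,q',x) \<in> gcall G \<Longrightarrow> (f q, a, f q', g x) \<in> dcall (encM f g G)"
  by (force simp: encM_def)
lemma encM_ret: "(q,a,oo,q') \<in> gret G \<Longrightarrow> (f q, a, map_option g oo, f q') \<in> dret (encM f g G)"
  by (force simp: encM_def)
lemma encM_int: "(q,a,q') \<in> gint G \<Longrightarrow> (f q, a, f q') \<in> dint (encM f g G)"
  by (force simp: encM_def)

lemma gstep_wf:
  assumes "gvpa_wf A G" "gstep A G (q, s) a (q', s')" "q \<in> gst G" "set s \<subseteq> ggam G"
  shows "q' \<in> gst G \<and> set s' \<subseteq> ggam G"
  using assms unfolding gstep_def gvpa_wf_def by fastforce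

lemma enc_fwd:
  assumes wf: "gvpa_wf A G"
  shows "greach A G (q, s) w (q', s') \<Longrightarrow> q \<in> gst G \<Longrightarrow> set s \<subseteq> ggam G \<Longrightarrow>
         vpa_reach A (encM f g G) (f q, map g s) w (f q', map g s')"
proof (induction w arbitrary: q s)
  case Nil then show ?case by simp
next
  case (Cons a w)
  then obtain q1 s1 where st1: "gstep A G (q, s) a (q1, s1)" and r: "greach A G (q1, s1) w (q', s')" by auto
  have wf1: "q1 \<in> gst G \<and> set s1 \<subseteq> ggam G" using gstep_wf[OF wf st1] Cons.prems by simp
  have "vpa_step A (encM f g G) (f q, map g s) a (f q1, map g s1)"
  proof -
    consider (c) "a \<in> calls A" "\<exists>x. (q, a, q1, x) \<in> gcall G \<and> s1 = x # s"
      | (r0) "a \<in> rets A" "s = []" "s1 = []" "(q, a, None, q1) \<in> gret G"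
      | (r1) "a \<in> rets A" "\<exists>x. s = x # s1 \<and> (q, a, Some x, q1) \<in> gret G"
      | (i) "a \<in> ints A" "(q, a, q1) \<in> gint G" "s1 = s"
      using st1 unfolding gstep_def by auto
    then show ?thesis
    proof cases
      case c then show ?thesis using encM_call[of q a q1 _ G f g] unfolding vpa_step_def by fastforce
    next
      case r0 then show ?thesis using encM_ret[of q a None q1 G f g] unfolding vpa_step_def by fastforce
    next
      case r1 then show ?thesis using encM_ret[of q a _ q1 G f g] unfolding vpa_step_def by fastforce
    next
      case i then show ?thesis using encM_int[of q a q1 G f g] unfolding vpa_step_def by fastforce
    qed
  qed
  then show ?case using Cons.IH[OF r] wf1 by auto
qed

lemma enc_bwd:
  assumes wf: "gvpa_wf A G" and f: "inj_on f (gst G)" and g: "inj_on g (ggam G)"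
  shows "vpa_reach A (encM f g G) (f q, map g s) w (p, t) \<Longrightarrow> q \<in> gst G \<Longrightarrow> set s \<subseteq> ggam G \<Longrightarrow>
         \<exists>q' s'. greach A G (q, s) w (q', s') \<and> p = f q' \<and> t = map g s' \<and> q' \<in> gst G"
proof (induction w arbitrary: q s)
  case Nil then show ?case by auto
next
  case (Cons a w)
  from Cons.prems(1) obtain p1 t1 where st1: "vpa_step A (encM f g G) (f q, map g s) a (p1, t1)"
    and r: "vpa_reach A (encM f g G) (p1, t1) w (p, t)" by auto
  have "\<exists>q1 s1. gstep A G (q, s) a (q1, s1) \<and> p1 = f q1 \<and> t1 = map g s1"
  proof -
    consider (c) "a \<in> calls A" "\<exists>x. (f q, a, p1, x) \<in> dcall (encM f g G) \<and> t1 = x # map g s"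
      | (r0) "a \<in> rets A" "map g s = []" "t1 = []" "(f q, a, None, p1) \<in> dret (encM f g G)"
      | (r1) "a \<in> rets A" "\<exists>x. map g s = x # t1 \<and> (f q, a, Some x, p1) \<in> dret (encM f g G)"
      | (i) "a \<in> ints A" "(f q, a, p1) \<in> dint (encM f g G)" "t1 = map g s"
      using st1 unfolding vpa_step_def by auto
    then show ?thesis
    proof cases
      case c
      then obtain x where x: "(f q, a, p1, x) \<in> dcall (encM f g G)" "t1 = x # map g s" by auto
      then obtain q0 q1 y where tr: "(q0, a, q1, y) \<in> gcall G" "f q0 = f q" "p1 = f q1" "x = g y"
        unfolding encM_def by auto
      have "q0 \<in> gst G" using tr(1) wf unfolding gvpa_wf_def by auto
      then have "q0 = q" using tr(2) Cons.prems(2) f by (auto dest: inj_onD)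
      then show ?thesis using tr x c unfolding gstep_def by (intro exI[of _ q1] exI[of _ "y # s"]) auto
    next
      case r0
      then obtain q0 q1 oo where tr: "(q0, a, oo, q1) \<in> gret G" "f q0 = f q" "p1 = f q1" "map_option g oo = None"
        unfolding encM_def by auto
      have "q0 \<in> gst G" using tr(1) wf unfolding gvpa_wf_def by auto
      then have "q0 = q" using tr(2) Cons.prems(2) f by (auto dest: inj_onD)
      then show ?thesis using tr r0 unfolding gstep_def by (intro exI[of _ q1] exI[of _ "[]"]) auto
    next
      case r1
      then obtain x where x: "map g s = x # t1" "(f q, a, Some x, p1) \<in> dret (encM f g G)" by auto
      then obtain y s1 where s: "s = y # s1" "x = g y" "t1 = map g s1" by auto
      from x(2) obtain tr where tr0: "tr \<in> gret G"
        and e: "(f q, a, Some x, p1) = (\<lambda>(q,a,oo,q'). (f q, a, map_option g oo, f q')) tr"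
        unfolding encM_def by auto
      obtain q0 a0 oo q1 where trd: "tr = (q0, a0, oo, q1)" by (cases tr) auto
      have "Some x = map_option g oo" using e trd by auto
      then obtain y0 where y0: "oo = Some y0" "g y0 = x" by (cases oo) auto
      have tr: "(q0, a, oo, q1) \<in> gret G" "f q0 = f q" "p1 = f q1" using tr0 trd e by auto
      have "q0 \<in> gst G" "y0 \<in> ggam G" using tr(1) wf y0(1) unfolding gvpa_wf_def by auto
      moreover have "y \<in> ggam G" using Cons.prems(3) s by auto
      ultimately have "q0 = q" "y0 = y" using tr(2) Cons.prems(2) f g y0(2) s(2) by (auto dest: inj_onD)
      then show ?thesis using tr r1 s y0 unfolding gstep_def by (intro exI[of _ q1] exI[of _ s1]) auto
    next
      case i
      then obtain q0 q1 where tr: "(q0, a, q1) \<in> gint G" "f q0 = f q" "p1 = f q1"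
        unfolding encM_def by auto
      have "q0 \<in> gst G" using tr(1) wf unfolding gvpa_wf_def by auto
      then have "q0 = q" using tr(2) Cons.prems(2) f by (auto dest: inj_onD)
      then show ?thesis using tr i unfolding gstep_def by (intro exI[of _ q1] exI[of _ s]) auto
    qed
  qed
  then obtain q1 s1 where st: "gstep A G (q, s) a (q1, s1)" "p1 = f q1" "t1 = map g s1" by blast
  have wf1: "q1 \<in> gst G \<and> set s1 \<subseteq> ggam G" using gstep_wf[OF wf st(1)] Cons.prems by simp
  obtain q' s' where "greach A G (q1, s1) w (q', s')" "p = f q'" "t = map g s'" "q' \<in> gst G"
    using Cons.IH[of q1 s1] r st wf1 by auto
  then show ?case using st by auto
qed

lemma gvpa_to_vpa:
  assumes wf: "gvpa_wf A G"
  shows "\<exists>M. vpa_wf A M \<and> vpa_lang A M = glang A G"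
proof -
  obtain f :: "'b \<Rightarrow> nat" and n where f: "inj_on f (gst G)"
    using finite_imp_inj_to_nat_seg[of "gst G"] wf unfolding gvpa_wf_def by blast
  obtain g :: "'c \<Rightarrow> nat" and n where g: "inj_on g (ggam G)"
    using finite_imp_inj_to_nat_seg[of "ggam G"] wf unfolding gvpa_wf_def by blast
  let ?M = "encM f g G"
  have "vpa_wf A ?M"
    using wf unfolding vpa_wf_def gvpa_wf_def encM_def by (auto 0 3)
  moreover have "vpa_lang A ?M = glang A G"
  proof (intro set_eqI iffI)
    fix w assume "w \<in> vpa_lang A ?M"
    then obtain q0 p t where q0: "q0 \<in> ginit G" "vpa_reach A ?M (f q0, map g []) w (p, t)" "p \<in> f ` gfin G"
      unfolding vpa_lang_def encM_def by auto
    have q0s: "q0 \<in> gst G" using q0(1) wf unfolding gvpa_wf_def by auto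
    obtain q' s' where r: "greach A G (q0, []) w (q', s')" "p = f q'" "q' \<in> gst G"
      using enc_bwd[OF wf f g q0(2) q0s] by auto
    obtain q'' where "q'' \<in> gfin G" "p = f q''" using q0(3) by auto
    moreover then have "q'' \<in> gst G" using wf unfolding gvpa_wf_def by auto
    ultimately have "q'' = q'" using r f by (auto dest: inj_onD)
    then show "w \<in> glang A G" using r q0(1) \<open>q'' \<in> gfin G\<close> unfolding glang_def by auto
  next
    fix w assume "w \<in> glang A G"
    then obtain q0 q s where q0: "q0 \<in> ginit G" "greach A G (q0, []) w (q, s)" "q \<in> gfin G"
      unfolding glang_def by auto
    have q0s: "q0 \<in> gst G" using q0(1) wf unfolding gvpa_wf_def by auto
    have "vpa_reach A ?M (f q0, map g []) w (f q, map g s)"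
      by (rule enc_fwd[OF wf q0(2) q0s]) simp
    then show "w \<in> vpa_lang A ?M" using q0 unfolding vpa_lang_def encM_def by auto
  qed
  ultimately show ?thesis by blast
qed


fun tagof :: "(nat \<times> nat) + (nat \<times> nat) \<Rightarrow> bool" where
  "tagof (Inl _) = True" | "tagof (Inr _) = False"

fun pj1e :: "(nat \<times> nat) + (nat \<times> nat) \<Rightarrow> nat list" where
  "pj1e (Inl (g, _)) = [g]" | "pj1e (Inr _) = []"
fun pj2e :: "(nat \<times> nat) + (nat \<times> nat) \<Rightarrow> nat list" where
  "pj2e (Inl _) = []" | "pj2e (Inr (g, _)) = [g]"
fun pjMe :: "(nat \<times> nat) + (nat \<times> nat) \<Rightarrow> nat" where
  "pjMe (Inl (_, g)) = g" | "pjMe (Inr (_, g)) = g"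

definition pj1 :: "((nat \<times> nat) + (nat \<times> nat)) list \<Rightarrow> nat list" where "pj1 s = concat (map pj1e s)"
definition pj2 :: "((nat \<times> nat) + (nat \<times> nat)) list \<Rightarrow> nat list" where "pj2 s = concat (map pj2e s)"
definition pjM :: "((nat \<times> nat) + (nat \<times> nat)) list \<Rightarrow> nat list" where "pjM s = map pjMe s"

lemma pj_simps[simp]:
  "pj1 [] = []" "pj2 [] = []" "pjM [] = []"
  "pj1 (Inl (a, b) # s) = a # pj1 s" "pj2 (Inl (a, b) # s) = pj2 s" "pjM (Inl (a, b) # s) = b # pjM s"
  "pj1 (Inr (a, b) # s) = pj1 s" "pj2 (Inr (a, b) # s) = a # pj2 s" "pjM (Inr (a, b) # s) = b # pjM s"
  by (simp_all add: pj1_def pj2_def pjM_def)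

lemma vpa_reach_append:
  "vpa_reach A M c (u @ v) c'' \<longleftrightarrow> (\<exists>c'. vpa_reach A M c u c' \<and> vpa_reach A M c' v c'')"
  by (induction u arbitrary: c) auto

locale prodset = setting A1 A2 prec for A1 A2 :: "'a vpalph" and prec +
  fixes M1 M2 M :: "'a vpa" and ord :: "nat \<Rightarrow> 'a \<Rightarrow> 'a \<Rightarrow> bool" and q0 :: nat
  assumes wf1: "vpa_wf A1 M1" and wf2: "vpa_wf A2 M2"
    and dc: "det_complete (vp_union A1 A2) M" and iM: "init M = {q0}"
    and ordp: "\<forall>w \<in> lists (letters (vp_union A1 A2)). \<forall>q s. vpa_reach (vp_union A1 A2) M (q0, []) w (q, s) \<longrightarrow> prec w = ord q"
begin

lemma wfM: "vpa_wf U M" using dc by (simp add: det_complete_def)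

definition supd :: "nat \<Rightarrow> 'a \<Rightarrow> 'a set \<Rightarrow> 'a set \<Rightarrow> 'a set \<times> 'a set" where
  "supd pM x S1 S2 = (if x \<in> letters A1 then (L, S2 \<inter> {b. ord pM x b}) else (S1 \<inter> {b. ord pM x b}, L))"

definition chk :: "'a \<Rightarrow> 'a set \<Rightarrow> 'a set \<Rightarrow> bool" where
  "chk x S1 S2 \<longleftrightarrow> (if x \<in> letters A1 then x \<in> S1 else x \<in> S2)"

definition Gst :: "(nat \<times> nat \<times> nat \<times> 'a set \<times> 'a set) set" where
  "Gst = st M1 \<times> st M2 \<times> st M \<times> Pow L \<times> Pow L"

definition Ggam :: "((nat \<times> nat) + (nat \<times> nat)) set" where
  "Ggam = Inl ` (gam M1 \<times> gam M) \<union> Inr ` (gam M2 \<times> gam M)"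

definition Gcall where
  "Gcall = {((p1,p2,pM,S1,S2), x, (p1',p2',pM',S1',S2'), ga).
     (p1,p2,pM,S1,S2) \<in> Gst \<and> (p1',p2',pM',S1',S2') \<in> Gst \<and> chk x S1 S2 \<and> (S1',S2') = supd pM x S1 S2 \<and>
     (\<exists>gM. (pM,x,pM',gM) \<in> dcall M \<and>
       ((x \<in> letters A1 \<and> p2' = p2 \<and> (\<exists>g1. (p1,x,p1',g1) \<in> dcall M1 \<and> ga = Inl (g1,gM))) \<or>
        (x \<in> letters A2 \<and> p1' = p1 \<and> (\<exists>g2. (p2,x,p2',g2) \<in> dcall M2 \<and> ga = Inr (g2,gM)))))}"

definition Gret where
  "Gret = {((p1,p2,pM,S1,S2), x, go, (p1',p2',pM',S1',S2')).
     (p1,p2,pM,S1,S2) \<in> Gst \<and> (p1',p2',pM',S1',S2') \<in> Gst \<and> chk x S1 S2 \<and> (S1',S2') = supd pM x S1 S2 \<and>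
       ((x \<in> letters A1 \<and> p2' = p2 \<and>
          ((go = None \<and> (p1,x,None,p1') \<in> dret M1 \<and> (pM,x,None,pM') \<in> dret M) \<or>
           (\<exists>g1 gM. go = Some (Inl (g1,gM)) \<and> (p1,x,Some g1,p1') \<in> dret M1 \<and> (pM,x,Some gM,pM') \<in> dret M))) \<or>
        (x \<in> letters A2 \<and> p1' = p1 \<and>
          ((go = None \<and> (p2,x,None,p2') \<in> dret M2 \<and> (pM,x,None,pM') \<in> dret M) \<or>
           (\<exists>g2 gM. go = Some (Inr (g2,gM)) \<and> (p2,x,Some g2,p2') \<in> dret M2 \<and> (pM,x,Some gM,pM') \<in> dret M))))}"

definition Gint where
  "Gint = {((p1,p2,pM,S1,S2), x, (p1',p2',pM',S1',S2')).
     (p1,p2,pM,S1,S2) \<in> Gst \<and> (p1',p2',pM',S1',S2') \<in> Gst \<and> chk x S1 S2 \<and> (S1',S2') = supd pM x S1 S2 \<and>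
     (pM,x,pM') \<in> dint M \<and>
       ((x \<in> letters A1 \<and> p2' = p2 \<and> (p1,x,p1') \<in> dint M1) \<or>
        (x \<in> letters A2 \<and> p1' = p1 \<and> (p2,x,p2') \<in> dint M2))}"

definition GG :: "('a, nat \<times> nat \<times> nat \<times> 'a set \<times> 'a set, (nat \<times> nat) + (nat \<times> nat)) gvpa" where
  "GG = \<lparr>gst = Gst, ginit = {(a, b, q0, L, L) | a b. a \<in> init M1 \<and> b \<in> init M2},
     gfin = {(p1,p2,pM,S1,S2). (p1,p2,pM,S1,S2) \<in> Gst \<and> p1 \<in> fin M1 \<and> p2 \<in> fin M2},
     ggam = Ggam, gcall = Gcall, gret = Gret, gint = Gint\<rparr>"

lemma finL: "finite L"
  using va1 va2 by (simp add: vp_alphabet_def)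

lemma GG_wf: "gvpa_wf U GG"
proof -
  have fin: "finite Gst" "finite Ggam"
    using wf1 wf2 wfM finL by (auto simp: Gst_def Ggam_def vpa_wf_def)
  have i: "ginit GG \<subseteq> gst GG"
    using wf1 wf2 wfM iM by (auto simp: GG_def Gst_def vpa_wf_def)
  have c: "\<forall>(q,a,q',g) \<in> gcall GG. q \<in> gst GG \<and> a \<in> calls U \<and> q' \<in> gst GG \<and> g \<in> ggam GG"
    using wf1 wf2 wfM unfolding GG_def Gcall_def Ggam_def vpa_wf_def by fastforce
  have r: "\<forall>(q,a,g,q') \<in> gret GG. q \<in> gst GG \<and> a \<in> rets U \<and> q' \<in> gst GG \<and> (\<forall>x. g = Some x \<longrightarrow> x \<in> ggam GG)"
    using wf1 wf2 wfM unfolding GG_def Gret_def Ggam_def vpa_wf_def by fastforce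
  have n: "\<forall>(q,a,q') \<in> gint GG. q \<in> gst GG \<and> a \<in> ints U \<and> q' \<in> gst GG"
    using wf1 wf2 wfM unfolding GG_def Gint_def vpa_wf_def by fastforce
  show ?thesis unfolding gvpa_wf_def using fin i c r n by (auto simp: GG_def)
qed

lemma wf_call1: "(p,x,p',g) \<in> dcall M1 \<Longrightarrow> x \<in> calls A1" using wf1 unfolding vpa_wf_def by fast
lemma wf_call2: "(p,x,p',g) \<in> dcall M2 \<Longrightarrow> x \<in> calls A2" using wf2 unfolding vpa_wf_def by fast
lemma wf_ret1: "(p,x,g,p') \<in> dret M1 \<Longrightarrow> x \<in> rets A1" using wf1 unfolding vpa_wf_def by fast
lemma wf_ret2: "(p,x,g,p') \<in> dret M2 \<Longrightarrow> x \<in> rets A2" using wf2 unfolding vpa_wf_def by fast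
lemma wf_int1: "(p,x,p') \<in> dint M1 \<Longrightarrow> x \<in> ints A1" using wf1 unfolding vpa_wf_def by fast
lemma wf_int2: "(p,x,p') \<in> dint M2 \<Longrightarrow> x \<in> ints A2" using wf2 unfolding vpa_wf_def by fast

lemma not_both: "x \<in> letters A1 \<Longrightarrow> x \<notin> letters A2" using disj by auto

lemma gstep_sound:
  assumes "gstep U GG ((p1,p2,pM,S1,S2), s) x ((p1',p2',pM',S1',S2'), s')"
  shows "(p1',p2',pM',S1',S2') \<in> Gst \<and> chk x S1 S2 \<and> (S1',S2') = supd pM x S1 S2 \<and> x \<in> L \<and>
    vpa_step U M (pM, pjM s) x (pM', pjM s') \<and>
    (x \<in> letters A1 \<longrightarrow> vpa_step A1 M1 (p1, pj1 s) x (p1', pj1 s') \<and> p2' = p2 \<and> pj2 s' = pj2 s) \<and>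
    (x \<in> letters A2 \<longrightarrow> vpa_step A2 M2 (p2, pj2 s) x (p2', pj2 s') \<and> p1' = p1 \<and> pj1 s' = pj1 s)"
proof -
  let ?P = "(p1,p2,pM,S1,S2)" and ?P' = "(p1',p2',pM',S1',S2')"
  consider (c) "x \<in> calls U" "\<exists>g. (?P, x, ?P', g) \<in> Gcall \<and> s' = g # s"
    | (r0) "x \<in> rets U" "s = []" "s' = []" "(?P, x, None, ?P') \<in> Gret"
    | (r1) "x \<in> rets U" "\<exists>g. s = g # s' \<and> (?P, x, Some g, ?P') \<in> Gret"
    | (i) "x \<in> ints U" "(?P, x, ?P') \<in> Gint" "s' = s"
    using assms unfolding gstep_def GG_def by auto
  then show ?thesis
  proof cases
    case c
    then obtain g where g: "(?P, x, ?P', g) \<in> Gcall" "s' = g # s" by auto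
    then have base: "?P' \<in> Gst" "chk x S1 S2" "(S1',S2') = supd pM x S1 S2"
      and ex: "\<exists>gM. (pM,x,pM',gM) \<in> dcall M \<and>
       ((x \<in> letters A1 \<and> p2' = p2 \<and> (\<exists>g1. (p1,x,p1',g1) \<in> dcall M1 \<and> g = Inl (g1,gM))) \<or>
        (x \<in> letters A2 \<and> p1' = p1 \<and> (\<exists>g2. (p2,x,p2',g2) \<in> dcall M2 \<and> g = Inr (g2,gM))))"
      unfolding Gcall_def by auto
    then obtain gM where gM: "(pM,x,pM',gM) \<in> dcall M" and
      alt: "(x \<in> letters A1 \<and> p2' = p2 \<and> (\<exists>g1. (p1,x,p1',g1) \<in> dcall M1 \<and> g = Inl (g1,gM))) \<or>
        (x \<in> letters A2 \<and> p1' = p1 \<and> (\<exists>g2. (p2,x,p2',g2) \<in> dcall M2 \<and> g = Inr (g2,gM)))" by blast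
    have xL: "x \<in> L" using c(1) calls_letters[of U] by blast
    from alt show ?thesis
    proof
      assume h: "x \<in> letters A1 \<and> p2' = p2 \<and> (\<exists>g1. (p1,x,p1',g1) \<in> dcall M1 \<and> g = Inl (g1,gM))"
      then obtain g1 where g1: "(p1,x,p1',g1) \<in> dcall M1" "g = Inl (g1,gM)" by blast
      show ?thesis using base xL h g1 g gM c wf_call1[OF g1(1)] not_both[of x]
        unfolding vpa_step_def by auto
    next
      assume h: "x \<in> letters A2 \<and> p1' = p1 \<and> (\<exists>g2. (p2,x,p2',g2) \<in> dcall M2 \<and> g = Inr (g2,gM))"
      then obtain g2 where g2: "(p2,x,p2',g2) \<in> dcall M2" "g = Inr (g2,gM)" by blast
      have "x \<notin> letters A1" using h disj by auto
      then show ?thesis using base xL h g2 g gM c wf_call2[OF g2(1)]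
        unfolding vpa_step_def by auto
    qed
  next
    case r0
    then have base: "?P' \<in> Gst" "chk x S1 S2" "(S1',S2') = supd pM x S1 S2"
      and alt: "(x \<in> letters A1 \<and> p2' = p2 \<and> (p1,x,None,p1') \<in> dret M1 \<and> (pM,x,None,pM') \<in> dret M) \<or>
        (x \<in> letters A2 \<and> p1' = p1 \<and> (p2,x,None,p2') \<in> dret M2 \<and> (pM,x,None,pM') \<in> dret M)"
      unfolding Gret_def by auto
    have xL: "x \<in> L" using r0(1) rets_letters[of U] by blast
    from alt show ?thesis
    proof
      assume h: "x \<in> letters A1 \<and> p2' = p2 \<and> (p1,x,None,p1') \<in> dret M1 \<and> (pM,x,None,pM') \<in> dret M"
      show ?thesis using base xL h r0 wf_ret1[of p1 x None p1'] not_both[of x]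
        unfolding vpa_step_def by auto
    next
      assume h: "x \<in> letters A2 \<and> p1' = p1 \<and> (p2,x,None,p2') \<in> dret M2 \<and> (pM,x,None,pM') \<in> dret M"
      have "x \<notin> letters A1" using h disj by auto
      then show ?thesis using base xL h r0 wf_ret2[of p2 x None p2']
        unfolding vpa_step_def by auto
    qed
  next
    case r1
    then obtain g where g: "s = g # s'" "(?P, x, Some g, ?P') \<in> Gret" by auto
    then have base: "?P' \<in> Gst" "chk x S1 S2" "(S1',S2') = supd pM x S1 S2"
      and alt: "(x \<in> letters A1 \<and> p2' = p2 \<and>
           (\<exists>g1 gM. Some g = Some (Inl (g1,gM)) \<and> (p1,x,Some g1,p1') \<in> dret M1 \<and> (pM,x,Some gM,pM') \<in> dret M)) \<or>
        (x \<in> letters A2 \<and> p1' = p1 \<and>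
           (\<exists>g2 gM. Some g = Some (Inr (g2,gM)) \<and> (p2,x,Some g2,p2') \<in> dret M2 \<and> (pM,x,Some gM,pM') \<in> dret M))"
      unfolding Gret_def by auto
    have xL: "x \<in> L" using r1(1) rets_letters[of U] by blast
    from alt show ?thesis
    proof
      assume h: "x \<in> letters A1 \<and> p2' = p2 \<and>
           (\<exists>g1 gM. Some g = Some (Inl (g1,gM)) \<and> (p1,x,Some g1,p1') \<in> dret M1 \<and> (pM,x,Some gM,pM') \<in> dret M)"
      then obtain g1 gM where t: "g = Inl (g1,gM)" "(p1,x,Some g1,p1') \<in> dret M1" "(pM,x,Some gM,pM') \<in> dret M"
        by blast
      show ?thesis using base xL h t g r1 wf_ret1[OF t(2)] not_both[of x]
        unfolding vpa_step_def by auto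
    next
      assume h: "x \<in> letters A2 \<and> p1' = p1 \<and>
           (\<exists>g2 gM. Some g = Some (Inr (g2,gM)) \<and> (p2,x,Some g2,p2') \<in> dret M2 \<and> (pM,x,Some gM,pM') \<in> dret M)"
      then obtain g2 gM where t: "g = Inr (g2,gM)" "(p2,x,Some g2,p2') \<in> dret M2" "(pM,x,Some gM,pM') \<in> dret M"
        by blast
      have "x \<notin> letters A1" using h disj by auto
      then show ?thesis using base xL h t g r1 wf_ret2[OF t(2)]
        unfolding vpa_step_def by auto
    qed
  next
    case i
    then have base: "?P' \<in> Gst" "chk x S1 S2" "(S1',S2') = supd pM x S1 S2" "(pM,x,pM') \<in> dint M"
      and alt: "(x \<in> letters A1 \<and> p2' = p2 \<and> (p1,x,p1') \<in> dint M1) \<or>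
        (x \<in> letters A2 \<and> p1' = p1 \<and> (p2,x,p2') \<in> dint M2)"
      unfolding Gint_def by auto
    have xL: "x \<in> L" using i(1) ints_letters[of U] by blast
    from alt show ?thesis
    proof
      assume h: "x \<in> letters A1 \<and> p2' = p2 \<and> (p1,x,p1') \<in> dint M1"
      show ?thesis using base xL h i wf_int1[of p1 x p1'] not_both[of x]
        unfolding vpa_step_def by auto
    next
      assume h: "x \<in> letters A2 \<and> p1' = p1 \<and> (p2,x,p2') \<in> dint M2"
      have "x \<notin> letters A1" using h disj by auto
      then show ?thesis using base xL h i wf_int2[of p2 x p2']
        unfolding vpa_step_def by auto
    qed
  qed
qed

lemma supd_OB:
  assumes "x \<in> L" "al \<in> lists L" "vpa_reach U M (q0, []) al (pM, t)"
  shows "supd pM x (OB L prec A1 al) (OB L prec A2 al) = (OB L prec A1 (al @ [x]), OB L prec A2 (al @ [x]))"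
proof -
  have o: "ord pM = prec al" using ordp assms(2,3) by metis
  show ?thesis
  proof (cases "x \<in> letters A1")
    case True
    then have "x \<notin> letters A2" using disj by auto
    then show ?thesis using True by (simp add: supd_def OB_snoc_in OB_snoc_out o)
  next
    case False
    then have "x \<in> letters A2" using assms(1) by simp
    then show ?thesis using False by (simp add: supd_def OB_snoc_in OB_snoc_out o)
  qed
qed

lemma sound:
  "greach U GG ((p1,p2,pM,S1,S2), s) v ((p1',p2',pM',S1',S2'), s') \<Longrightarrow>
   vpa_reach U M (q0, []) al (pM, pjM s) \<Longrightarrow> al \<in> lists L \<Longrightarrow>
   S1 = OB L prec A1 al \<Longrightarrow> S2 = OB L prec A2 al \<Longrightarrow>
   vpa_reach A1 M1 (p1, pj1 s) (F A1 v) (p1', pj1 s') \<and> vpa_reach A2 M2 (p2, pj2 s) (F A2 v) (p2', pj2 s') \<and>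
   v \<in> lists L \<and>
   (\<forall>m<length v. (v ! m \<in> letters A1 \<longrightarrow> v ! m \<in> OB L prec A1 (al @ take m v)) \<and>
                  (v ! m \<in> letters A2 \<longrightarrow> v ! m \<in> OB L prec A2 (al @ take m v)))"
proof (induction v arbitrary: p1 p2 pM S1 S2 s al)
  case Nil then show ?case by (simp add: F_def)
next
  case (Cons x v)
  from Cons.prems(1) obtain c where st: "gstep U GG ((p1,p2,pM,S1,S2), s) x c"
    and r: "greach U GG c v ((p1',p2',pM',S1',S2'), s')" by auto
  obtain q1 q2 qM T1 T2 s1 where cd: "c = ((q1,q2,qM,T1,T2), s1)" by (cases c) auto
  have S: "(q1,q2,qM,T1,T2) \<in> Gst \<and> chk x S1 S2 \<and> (T1,T2) = supd pM x S1 S2 \<and> x \<in> L \<and>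
    vpa_step U M (pM, pjM s) x (qM, pjM s1) \<and>
    (x \<in> letters A1 \<longrightarrow> vpa_step A1 M1 (p1, pj1 s) x (q1, pj1 s1) \<and> q2 = p2 \<and> pj2 s1 = pj2 s) \<and>
    (x \<in> letters A2 \<longrightarrow> vpa_step A2 M2 (p2, pj2 s) x (q2, pj2 s1) \<and> q1 = p1 \<and> pj1 s1 = pj1 s)"
    using gstep_sound st cd by blast
  have xL: "x \<in> L" using S by blast
  have rM: "vpa_reach U M (q0, []) (al @ [x]) (qM, pjM s1)"
    using Cons.prems(2) S by (auto simp: vpa_reach_append)
  have alx: "al @ [x] \<in> lists L" using Cons.prems(3) xL by simp
  have T: "T1 = OB L prec A1 (al @ [x])" "T2 = OB L prec A2 (al @ [x])"
    using supd_OB[OF xL Cons.prems(3,2)] S Cons.prems(4,5) by auto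
  have IH: "vpa_reach A1 M1 (q1, pj1 s1) (F A1 v) (p1', pj1 s') \<and> vpa_reach A2 M2 (q2, pj2 s1) (F A2 v) (p2', pj2 s') \<and>
   v \<in> lists L \<and>
   (\<forall>m<length v. (v ! m \<in> letters A1 \<longrightarrow> v ! m \<in> OB L prec A1 ((al @ [x]) @ take m v)) \<and>
                  (v ! m \<in> letters A2 \<longrightarrow> v ! m \<in> OB L prec A2 ((al @ [x]) @ take m v)))"
    using Cons.IH[OF r[unfolded cd] rM alx T] .
  have R: "vpa_reach A1 M1 (p1, pj1 s) (F A1 (x # v)) (p1', pj1 s') \<and>
           vpa_reach A2 M2 (p2, pj2 s) (F A2 (x # v)) (p2', pj2 s')"
  proof (cases "x \<in> letters A1")
    case True
    then have "x \<notin> letters A2" using disj by auto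
    then show ?thesis using True S IH by (auto simp: F_def)
  next
    case False
    then have "x \<in> letters A2" using xL by simp
    then show ?thesis using False S IH by (auto simp: F_def)
  qed
  have O: "\<forall>m<length (x # v). ((x # v) ! m \<in> letters A1 \<longrightarrow> (x # v) ! m \<in> OB L prec A1 (al @ take m (x # v))) \<and>
                  ((x # v) ! m \<in> letters A2 \<longrightarrow> (x # v) ! m \<in> OB L prec A2 (al @ take m (x # v)))"
  proof (intro allI impI)
    fix m assume m: "m < length (x # v)"
    show "((x # v) ! m \<in> letters A1 \<longrightarrow> (x # v) ! m \<in> OB L prec A1 (al @ take m (x # v))) \<and>
          ((x # v) ! m \<in> letters A2 \<longrightarrow> (x # v) ! m \<in> OB L prec A2 (al @ take m (x # v)))"
    proof (cases m)
      case 0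
      have "chk x S1 S2" using S by blast
      then show ?thesis using 0 Cons.prems(4,5) disj by (auto simp: chk_def split: if_splits)
    next
      case (Suc m')
      then show ?thesis using IH m by auto
    qed
  qed
  show ?case using R O IH xL by simp
qed

end


context prodset
begin

lemma M_call:
  assumes "pM \<in> st M" "x \<in> calls U" shows "\<exists>qM gM. (pM,x,qM,gM) \<in> dcall M"
proof -
  have "\<forall>q \<in> st M. \<forall>a \<in> calls U. \<exists>!p. (q,a,p) \<in> dcall M"
    using dc unfolding det_complete_def by (elim conjE) assumption
  then have "\<exists>p. (pM,x,p) \<in> dcall M" using assms by blast
  then show ?thesis by auto
qed
lemma M_ret:
  assumes "pM \<in> st M" "x \<in> rets U" "go \<in> insert None (Some ` gam M)" shows "\<exists>qM. (pM,x,go,qM) \<in> dret M"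
proof -
  have "\<forall>q \<in> st M. \<forall>a \<in> rets U. \<forall>g \<in> insert None (Some ` gam M). \<exists>!q'. (q, a, g, q') \<in> dret M"
    using dc unfolding det_complete_def by (elim conjE) assumption
  then show ?thesis using assms by blast
qed
lemma M_int:
  assumes "pM \<in> st M" "x \<in> ints U" shows "\<exists>qM. (pM,x,qM) \<in> dint M"
proof -
  have "\<forall>q \<in> st M. \<forall>a \<in> ints U. \<exists>!q'. (q, a, q') \<in> dint M"
    using dc unfolding det_complete_def by (elim conjE) assumption
  then show ?thesis using assms by blast
qed

lemma step_call: "vpa_step A N (p, t) x (p', t') \<Longrightarrow> x \<in> calls A \<Longrightarrow> x \<notin> rets A \<Longrightarrow> x \<notin> ints A \<Longrightarrow>
   \<exists>g. (p,x,p',g) \<in> dcall N \<and> t' = g # t"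
  unfolding vpa_step_def by auto
lemma step_ret: "vpa_step A N (p, t) x (p', t') \<Longrightarrow> x \<notin> calls A \<Longrightarrow> x \<in> rets A \<Longrightarrow> x \<notin> ints A \<Longrightarrow>
   (t = [] \<and> t' = [] \<and> (p,x,None,p') \<in> dret N) \<or> (\<exists>g. t = g # t' \<and> (p,x,Some g,p') \<in> dret N)"
  unfolding vpa_step_def by auto
lemma step_int: "vpa_step A N (p, t) x (p', t') \<Longrightarrow> x \<notin> calls A \<Longrightarrow> x \<notin> rets A \<Longrightarrow> x \<in> ints A \<Longrightarrow>
   (p,x,p') \<in> dint N \<and> t' = t"
  unfolding vpa_step_def by auto

lemma supd_Pow: "S1 \<subseteq> L \<Longrightarrow> S2 \<subseteq> L \<Longrightarrow> fst (supd pM x S1 S2) \<subseteq> L \<and> snd (supd pM x S1 S2) \<subseteq> L"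
  by (auto simp: supd_def)

lemma kinds1: "x \<in> letters A1 \<Longrightarrow>
   (x \<in> calls U \<longleftrightarrow> x \<in> calls A1) \<and> (x \<in> rets U \<longleftrightarrow> x \<in> rets A1) \<and> (x \<in> ints U \<longleftrightarrow> x \<in> ints A1) \<and>
   (x \<in> calls A1 \<or> x \<in> rets A1 \<or> x \<in> ints A1) \<and>
   \<not> (x \<in> calls A1 \<and> x \<in> rets A1) \<and> \<not> (x \<in> calls A1 \<and> x \<in> ints A1) \<and> \<not> (x \<in> rets A1 \<and> x \<in> ints A1)"
  using disj cr1 ci1 ri1 calls_letters[of A2] rets_letters[of A2] ints_letters[of A2]
  by (auto simp: letters_def)
lemma kinds2: "x \<in> letters A2 \<Longrightarrow>
   (x \<in> calls U \<longleftrightarrow> x \<in> calls A2) \<and> (x \<in> rets U \<longleftrightarrow> x \<in> rets A2) \<and> (x \<in> ints U \<longleftrightarrow> x \<in> ints A2) \<and>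
   (x \<in> calls A2 \<or> x \<in> rets A2 \<or> x \<in> ints A2) \<and>
   \<not> (x \<in> calls A2 \<and> x \<in> rets A2) \<and> \<not> (x \<in> calls A2 \<and> x \<in> ints A2) \<and> \<not> (x \<in> rets A2 \<and> x \<in> ints A2)"
  using disj cr2 ci2 ri2 calls_letters[of A1] rets_letters[of A1] ints_letters[of A1]
  by (auto simp: letters_def)

definition newtags :: "'a \<Rightarrow> bool list \<Rightarrow> bool list" where
  "newtags x ts = (if x \<in> calls U then (x \<in> letters A1) # ts else if x \<in> rets U then tl ts else ts)"

lemma gstep_compl1:
  assumes P: "(p1,p2,pM,S1,S2) \<in> Gst" and sg: "set s \<subseteq> Ggam" and x1: "x \<in> letters A1"
    and ck: "chk x S1 S2"
    and tg: "x \<in> rets U \<Longrightarrow> s = [] \<or> tagof (hd s)"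
    and m1: "vpa_step A1 M1 (p1, pj1 s) x (p1', t1)" and T: "supd pM x S1 S2 = (T1, T2)"
  shows "\<exists>qM s'. gstep U GG ((p1,p2,pM,S1,S2), s) x ((p1',p2,qM,T1,T2), s') \<and>
     set s' \<subseteq> Ggam \<and> vpa_step U M (pM, pjM s) x (qM, pjM s') \<and> pj1 s' = t1 \<and> pj2 s' = pj2 s \<and>
     map tagof s' = newtags x (map tagof s)"
proof -
  have K: "(x \<in> calls U \<longleftrightarrow> x \<in> calls A1) \<and> (x \<in> rets U \<longleftrightarrow> x \<in> rets A1) \<and> (x \<in> ints U \<longleftrightarrow> x \<in> ints A1) \<and>
   (x \<in> calls A1 \<or> x \<in> rets A1 \<or> x \<in> ints A1) \<and>
   \<not> (x \<in> calls A1 \<and> x \<in> rets A1) \<and> \<not> (x \<in> calls A1 \<and> x \<in> ints A1) \<and> \<not> (x \<in> rets A1 \<and> x \<in> ints A1)"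
    using kinds1[OF x1] .
  have pM: "pM \<in> st M" and p1: "p1 \<in> st M1" and p2: "p2 \<in> st M2" and SS: "S1 \<subseteq> L" "S2 \<subseteq> L"
    using P by (auto simp: Gst_def)
  have SP: "T1 \<subseteq> L" "T2 \<subseteq> L" using supd_Pow[OF SS, of pM x] T by auto
  have nx2: "x \<notin> letters A2" using x1 disj by auto
  have wM: "vpa_wf U M" by (rule wfM)
  consider (c) "x \<in> calls A1" | (r) "x \<in> rets A1" | (i) "x \<in> ints A1" using K by blast
  then show ?thesis
  proof cases
    case c
    obtain g1 where g1: "(p1,x,p1',g1) \<in> dcall M1" "t1 = g1 # pj1 s" using step_call[OF m1 c] K c by blast
    obtain qM gM where gM: "(pM,x,qM,gM) \<in> dcall M" using M_call[OF pM] K c by blast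
    have ins: "p1' \<in> st M1" "g1 \<in> gam M1" using g1(1) wf1 unfolding vpa_wf_def by fast+
    have inM: "qM \<in> st M" "gM \<in> gam M" using gM wM unfolding vpa_wf_def by fast+
    have tr: "((p1,p2,pM,S1,S2), x, (p1',p2,qM,T1,T2), Inl (g1, gM)) \<in> Gcall"
      unfolding Gcall_def using P ck x1 g1 gM ins inM p2 SP T by (auto simp: Gst_def)
    show ?thesis
      using tr K c g1 gM sg ins inM by (intro exI[of _ qM] exI[of _ "Inl (g1, gM) # s"]) (auto simp: gstep_def GG_def vpa_step_def Ggam_def newtags_def x1)
  next
    case r
    have xc: "x \<notin> calls A1" "x \<notin> ints A1" using K r by auto
    have xU: "x \<in> rets U" "x \<notin> calls U" "x \<notin> ints U" using K r by auto
    consider (e) "s = []" | (t) a b s0 where "s = Inl (a, b) # s0"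
      using tg[OF xU(1)] by (cases s) (auto elim: tagof.elims)
    then show ?thesis
    proof cases
      case e
      have h: "(p1,x,None,p1') \<in> dret M1" "t1 = []"
        using step_ret[OF m1 xc(1) r xc(2)] e by auto
      obtain qM where qM: "(pM,x,None,qM) \<in> dret M" using M_ret[OF pM xU(1)] by blast
      have ins: "p1' \<in> st M1" using h(1) wf1 unfolding vpa_wf_def by fast
      have inM: "qM \<in> st M" using qM wM unfolding vpa_wf_def by fast
      have tr: "((p1,p2,pM,S1,S2), x, None, (p1',p2,qM,T1,T2)) \<in> Gret"
        unfolding Gret_def using P ck x1 h qM ins inM p2 SP T by (auto simp: Gst_def)
      show ?thesis
        using tr xU e h qM by (intro exI[of _ qM] exI[of _ "[]"]) (auto simp: gstep_def GG_def vpa_step_def newtags_def)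
    next
      case t
      have bM: "b \<in> gam M" using sg t by (auto simp: Ggam_def)
      have h: "(p1,x,Some a,p1') \<in> dret M1" "t1 = pj1 s0"
        using step_ret[OF m1 xc(1) r xc(2)] t by auto
      obtain qM where qM: "(pM,x,Some b,qM) \<in> dret M" using M_ret[OF pM xU(1)] bM by blast
      have ins: "p1' \<in> st M1" using h(1) wf1 unfolding vpa_wf_def by fast
      have inM: "qM \<in> st M" using qM wM unfolding vpa_wf_def by fast
      have tr: "((p1,p2,pM,S1,S2), x, Some (Inl (a, b)), (p1',p2,qM,T1,T2)) \<in> Gret"
        unfolding Gret_def using P ck x1 h qM ins inM p2 SP T by (auto simp: Gst_def)
      show ?thesis
        using tr xU t h qM sg by (intro exI[of _ qM] exI[of _ s0]) (auto simp: gstep_def GG_def vpa_step_def newtags_def)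
    qed
  next
    case i
    have xc: "x \<notin> calls A1" "x \<notin> rets A1" using K i by auto
    have xU: "x \<in> ints U" "x \<notin> calls U" "x \<notin> rets U" using K i by auto
    have h: "(p1,x,p1') \<in> dint M1" "t1 = pj1 s" using step_int[OF m1 xc i] by auto
    obtain qM where qM: "(pM,x,qM) \<in> dint M" using M_int[OF pM xU(1)] by blast
    have ins: "p1' \<in> st M1" using h(1) wf1 unfolding vpa_wf_def by fast
    have inM: "qM \<in> st M" using qM wM unfolding vpa_wf_def by fast
    have tr: "((p1,p2,pM,S1,S2), x, (p1',p2,qM,T1,T2)) \<in> Gint"
      unfolding Gint_def using P ck x1 h qM ins inM p2 SP T by (auto simp: Gst_def)
    show ?thesis
      using tr xU h qM sg by (intro exI[of _ qM] exI[of _ s]) (auto simp: gstep_def GG_def vpa_step_def newtags_def)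
  qed
qed


lemma gstep_compl2:
  assumes P: "(p1,p2,pM,S1,S2) \<in> Gst" and sg: "set s \<subseteq> Ggam" and x2: "x \<in> letters A2"
    and ck: "chk x S1 S2"
    and tg: "x \<in> rets U \<Longrightarrow> s = [] \<or> \<not> tagof (hd s)"
    and m2: "vpa_step A2 M2 (p2, pj2 s) x (p2', t2)" and T: "supd pM x S1 S2 = (T1, T2)"
  shows "\<exists>qM s'. gstep U GG ((p1,p2,pM,S1,S2), s) x ((p1,p2',qM,T1,T2), s') \<and>
     set s' \<subseteq> Ggam \<and> vpa_step U M (pM, pjM s) x (qM, pjM s') \<and> pj2 s' = t2 \<and> pj1 s' = pj1 s \<and>
     map tagof s' = newtags x (map tagof s)"
proof -
  have K: "(x \<in> calls U \<longleftrightarrow> x \<in> calls A2) \<and> (x \<in> rets U \<longleftrightarrow> x \<in> rets A2) \<and> (x \<in> ints U \<longleftrightarrow> x \<in> ints A2) \<and>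
   (x \<in> calls A2 \<or> x \<in> rets A2 \<or> x \<in> ints A2) \<and>
   \<not> (x \<in> calls A2 \<and> x \<in> rets A2) \<and> \<not> (x \<in> calls A2 \<and> x \<in> ints A2) \<and> \<not> (x \<in> rets A2 \<and> x \<in> ints A2)"
    using kinds2[OF x2] .
  have pM: "pM \<in> st M" and p1: "p1 \<in> st M1" and p2: "p2 \<in> st M2" and SS: "S1 \<subseteq> L" "S2 \<subseteq> L"
    using P by (auto simp: Gst_def)
  have SP: "T1 \<subseteq> L" "T2 \<subseteq> L" using supd_Pow[OF SS, of pM x] T by auto
  have nx1: "x \<notin> letters A1" using x2 disj by auto
  have wM: "vpa_wf U M" by (rule wfM)
  consider (c) "x \<in> calls A2" | (r) "x \<in> rets A2" | (i) "x \<in> ints A2" using K by blast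
  then show ?thesis
  proof cases
    case c
    obtain g1 where g1: "(p2,x,p2',g1) \<in> dcall M2" "t2 = g1 # pj2 s" using step_call[OF m2 c] K c by blast
    obtain qM gM where gM: "(pM,x,qM,gM) \<in> dcall M" using M_call[OF pM] K c by blast
    have ins: "p2' \<in> st M2" "g1 \<in> gam M2" using g1(1) wf2 unfolding vpa_wf_def by fast+
    have inM: "qM \<in> st M" "gM \<in> gam M" using gM wM unfolding vpa_wf_def by fast+
    have tr: "((p1,p2,pM,S1,S2), x, (p1,p2',qM,T1,T2), Inr (g1, gM)) \<in> Gcall"
      unfolding Gcall_def using P ck x2 nx1 g1 gM ins inM p1 SP T by (auto simp: Gst_def)
    show ?thesis
      using tr K c g1 gM sg ins inM by (intro exI[of _ qM] exI[of _ "Inr (g1, gM) # s"]) (auto simp: gstep_def GG_def vpa_step_def Ggam_def newtags_def nx1)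
  next
    case r
    have xc: "x \<notin> calls A2" "x \<notin> ints A2" using K r by auto
    have xU: "x \<in> rets U" "x \<notin> calls U" "x \<notin> ints U" using K r by auto
    consider (e) "s = []" | (t) a b s0 where "s = Inr (a, b) # s0"
      using tg[OF xU(1)] by (cases s) (auto elim: tagof.elims)
    then show ?thesis
    proof cases
      case e
      have h: "(p2,x,None,p2') \<in> dret M2" "t2 = []"
        using step_ret[OF m2 xc(1) r xc(2)] e by auto
      obtain qM where qM: "(pM,x,None,qM) \<in> dret M" using M_ret[OF pM xU(1)] by blast
      have ins: "p2' \<in> st M2" using h(1) wf2 unfolding vpa_wf_def by fast
      have inM: "qM \<in> st M" using qM wM unfolding vpa_wf_def by fast
      have tr: "((p1,p2,pM,S1,S2), x, None, (p1,p2',qM,T1,T2)) \<in> Gret"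
        unfolding Gret_def using P ck x2 nx1 h qM ins inM p1 SP T by (auto simp: Gst_def)
      show ?thesis
        using tr xU e h qM by (intro exI[of _ qM] exI[of _ "[]"]) (auto simp: gstep_def GG_def vpa_step_def newtags_def)
    next
      case t
      have bM: "b \<in> gam M" using sg t by (auto simp: Ggam_def)
      have h: "(p2,x,Some a,p2') \<in> dret M2" "t2 = pj2 s0"
        using step_ret[OF m2 xc(1) r xc(2)] t by auto
      obtain qM where qM: "(pM,x,Some b,qM) \<in> dret M" using M_ret[OF pM xU(1)] bM by blast
      have ins: "p2' \<in> st M2" using h(1) wf2 unfolding vpa_wf_def by fast
      have inM: "qM \<in> st M" using qM wM unfolding vpa_wf_def by fast
      have tr: "((p1,p2,pM,S1,S2), x, Some (Inr (a, b)), (p1,p2',qM,T1,T2)) \<in> Gret"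
        unfolding Gret_def using P ck x2 nx1 h qM ins inM p1 SP T by (auto simp: Gst_def)
      show ?thesis
        using tr xU t h qM sg by (intro exI[of _ qM] exI[of _ s0]) (auto simp: gstep_def GG_def vpa_step_def newtags_def)
    qed
  next
    case i
    have xc: "x \<notin> calls A2" "x \<notin> rets A2" using K i by auto
    have xU: "x \<in> ints U" "x \<notin> calls U" "x \<notin> rets U" using K i by auto
    have h: "(p2,x,p2') \<in> dint M2" "t2 = pj2 s" using step_int[OF m2 xc i] by auto
    obtain qM where qM: "(pM,x,qM) \<in> dint M" using M_int[OF pM xU(1)] by blast
    have ins: "p2' \<in> st M2" using h(1) wf2 unfolding vpa_wf_def by fast
    have inM: "qM \<in> st M" using qM wM unfolding vpa_wf_def by fast
    have tr: "((p1,p2,pM,S1,S2), x, (p1,p2',qM,T1,T2)) \<in> Gint"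
      unfolding Gint_def using P ck x2 nx1 h qM ins inM p1 SP T by (auto simp: Gst_def)
    show ?thesis
      using tr xU h qM sg by (intro exI[of _ qM] exI[of _ s]) (auto simp: gstep_def GG_def vpa_step_def newtags_def)
  qed
qed

end


fun tagok :: "'a vpalph \<Rightarrow> 'a vpalph \<Rightarrow> bool list \<Rightarrow> 'a list \<Rightarrow> bool" where
  "tagok A1 A2 ts [] = True"
| "tagok A1 A2 ts (x # v) = ((x \<in> rets (vp_union A1 A2) \<longrightarrow> ts = [] \<or> hd ts = (x \<in> letters A1)) \<and>
     tagok A1 A2 (if x \<in> calls (vp_union A1 A2) then (x \<in> letters A1) # ts
        else if x \<in> rets (vp_union A1 A2) then tl ts else ts) v)"

context prodset
begin

lemma tagok_newtags: "tagok A1 A2 ts (x # v) \<longleftrightarrow>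
   ((x \<in> rets U \<longrightarrow> ts = [] \<or> hd ts = (x \<in> letters A1)) \<and> tagok A1 A2 (newtags x ts) v)"
  by (simp add: newtags_def)

lemma tagok_ustk:
  "(\<forall>j<length v. v ! j \<in> rets U \<longrightarrow> ustk U (al @ take j v) = [] \<or>
       (hd (ustk U (al @ take j v)) \<in> letters A1 \<longleftrightarrow> v ! j \<in> letters A1)) \<Longrightarrow>
   tagok A1 A2 (map (\<lambda>c. c \<in> letters A1) (ustk U al)) v"
proof (induction v arbitrary: al)
  case Nil then show ?case by simp
next
  case (Cons x v)
  have h0: "x \<in> rets U \<longrightarrow> ustk U al = [] \<or> (hd (ustk U al) \<in> letters A1 \<longleftrightarrow> x \<in> letters A1)"
    using Cons.prems[rule_format, of 0] by simp
  have hs: "\<forall>j<length v. v ! j \<in> rets U \<longrightarrow> ustk U ((al @ [x]) @ take j v) = [] \<or>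
       (hd (ustk U ((al @ [x]) @ take j v)) \<in> letters A1 \<longleftrightarrow> v ! j \<in> letters A1)"
  proof (intro allI impI)
    fix j assume "j < length v" "v ! j \<in> rets U"
    then show "ustk U ((al @ [x]) @ take j v) = [] \<or>
       (hd (ustk U ((al @ [x]) @ take j v)) \<in> letters A1 \<longleftrightarrow> v ! j \<in> letters A1)"
      using Cons.prems[rule_format, of "Suc j"] by simp
  qed
  have "tagok A1 A2 (map (\<lambda>c. c \<in> letters A1) (ustk U (al @ [x]))) v" using Cons.IH[OF hs] .
  moreover have "map (\<lambda>c. c \<in> letters A1) (ustk U (al @ [x])) =
     (if x \<in> calls U then (x \<in> letters A1) # map (\<lambda>c. c \<in> letters A1) (ustk U al)
        else if x \<in> rets U then tl (map (\<lambda>c. c \<in> letters A1) (ustk U al)) else map (\<lambda>c. c \<in> letters A1) (ustk U al))"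
    by (simp add: ustk_snoc ustep_def map_tl)
  ultimately show ?case using h0 by (cases "ustk U al") auto
qed

lemma compl:
  "vpa_reach A1 M1 (p1, pj1 s) (F A1 v) (p1', t1) \<Longrightarrow> vpa_reach A2 M2 (p2, pj2 s) (F A2 v) (p2', t2) \<Longrightarrow>
   (p1,p2,pM,S1,S2) \<in> Gst \<Longrightarrow> set s \<subseteq> Ggam \<Longrightarrow> v \<in> lists L \<Longrightarrow>
   vpa_reach U M (q0, []) al (pM, pjM s) \<Longrightarrow> al \<in> lists L \<Longrightarrow>
   S1 = OB L prec A1 al \<Longrightarrow> S2 = OB L prec A2 al \<Longrightarrow>
   (\<forall>m<length v. (v ! m \<in> letters A1 \<longrightarrow> v ! m \<in> OB L prec A1 (al @ take m v)) \<and>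
                  (v ! m \<in> letters A2 \<longrightarrow> v ! m \<in> OB L prec A2 (al @ take m v))) \<Longrightarrow>
   tagok A1 A2 (map tagof s) v \<Longrightarrow>
   \<exists>pM' S1' S2' s'. greach U GG ((p1,p2,pM,S1,S2), s) v ((p1',p2',pM',S1',S2'), s')"
proof (induction v arbitrary: p1 p2 pM S1 S2 s al)
  case Nil then show ?case by (simp add: F_def)
next
  case (Cons x v)
  have xL: "x \<in> L" using Cons.prems(5) by simp
  have vL: "v \<in> lists L" using Cons.prems(5) by simp
  have ck: "chk x S1 S2"
    using Cons.prems(10)[rule_format, of 0] Cons.prems(8,9) xL by (auto simp: chk_def)
  obtain T1 T2 where T: "supd pM x S1 S2 = (T1, T2)" by (cases "supd pM x S1 S2") auto
  have TO: "T1 = OB L prec A1 (al @ [x])" "T2 = OB L prec A2 (al @ [x])"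
    using supd_OB[OF xL Cons.prems(7,6)] T Cons.prems(8,9) by auto
  have alx: "al @ [x] \<in> lists L" using Cons.prems(7) xL by simp
  have LW: "\<forall>m<length v. (v ! m \<in> letters A1 \<longrightarrow> v ! m \<in> OB L prec A1 ((al @ [x]) @ take m v)) \<and>
                  (v ! m \<in> letters A2 \<longrightarrow> v ! m \<in> OB L prec A2 ((al @ [x]) @ take m v))"
  proof (intro allI impI)
    fix m assume "m < length v"
    then show "(v ! m \<in> letters A1 \<longrightarrow> v ! m \<in> OB L prec A1 ((al @ [x]) @ take m v)) \<and>
                  (v ! m \<in> letters A2 \<longrightarrow> v ! m \<in> OB L prec A2 ((al @ [x]) @ take m v))"
      using Cons.prems(10)[rule_format, of "Suc m"] by simp
  qed
  have tg0: "x \<in> rets U \<longrightarrow> map tagof s = [] \<or> hd (map tagof s) = (x \<in> letters A1)"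
    and tg1: "tagok A1 A2 (newtags x (map tagof s)) v"
    using Cons.prems(11) tagok_newtags by auto
  show ?case
  proof (cases "x \<in> letters A1")
    case True
    have nx2: "x \<notin> letters A2" using True disj by auto
    obtain p1'' t1'' where r1: "vpa_step A1 M1 (p1, pj1 s) x (p1'', t1'')"
      "vpa_reach A1 M1 (p1'', t1'') (F A1 v) (p1', t1)"
      using Cons.prems(1) True by (auto simp: F_def)
    have r2: "vpa_reach A2 M2 (p2, pj2 s) (F A2 v) (p2', t2)" using Cons.prems(2) nx2 by (simp add: F_def)
    have tg: "x \<in> rets U \<Longrightarrow> s = [] \<or> tagof (hd s)" using tg0 True by (cases s) auto
    obtain qM s' where G: "gstep U GG ((p1,p2,pM,S1,S2), s) x ((p1'',p2,qM,T1,T2), s')"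
      "set s' \<subseteq> Ggam" "vpa_step U M (pM, pjM s) x (qM, pjM s')" "pj1 s' = t1''" "pj2 s' = pj2 s"
      "map tagof s' = newtags x (map tagof s)"
      using gstep_compl1[OF Cons.prems(3,4) True ck tg r1(1) T] by blast
    have Gs: "(p1'',p2,qM,T1,T2) \<in> Gst" using gstep_sound[OF G(1)] by blast
    have rM: "vpa_reach U M (q0, []) (al @ [x]) (qM, pjM s')"
      using Cons.prems(6) G(3) by (auto simp: vpa_reach_append)
    obtain pM' S1' S2' s'' where RR: "greach U GG ((p1'',p2,qM,T1,T2), s') v ((p1',p2',pM',S1',S2'), s'')"
      using Cons.IH[of p1'' s' p2 qM T1 T2 "al @ [x]"] r1(2) r2 G Gs vL rM alx TO LW tg1 by auto
    have "greach U GG ((p1,p2,pM,S1,S2), s) (x # v) ((p1',p2',pM',S1',S2'), s'')"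
      unfolding greach.simps using G(1) RR by blast
    then show ?thesis by blast
  next
    case False
    have x2: "x \<in> letters A2" using False xL by simp
    obtain p2'' t2'' where r2: "vpa_step A2 M2 (p2, pj2 s) x (p2'', t2'')"
      "vpa_reach A2 M2 (p2'', t2'') (F A2 v) (p2', t2)"
      using Cons.prems(2) x2 by (auto simp: F_def)
    have r1: "vpa_reach A1 M1 (p1, pj1 s) (F A1 v) (p1', t1)" using Cons.prems(1) False by (simp add: F_def)
    have tg: "x \<in> rets U \<Longrightarrow> s = [] \<or> \<not> tagof (hd s)" using tg0 False by (cases s) auto
    obtain qM s' where G: "gstep U GG ((p1,p2,pM,S1,S2), s) x ((p1,p2'',qM,T1,T2), s')"
      "set s' \<subseteq> Ggam" "vpa_step U M (pM, pjM s) x (qM, pjM s')" "pj2 s' = t2''" "pj1 s' = pj1 s"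
      "map tagof s' = newtags x (map tagof s)"
      using gstep_compl2[OF Cons.prems(3,4) x2 ck tg r2(1) T] by blast
    have Gs: "(p1,p2'',qM,T1,T2) \<in> Gst" using gstep_sound[OF G(1)] by blast
    have rM: "vpa_reach U M (q0, []) (al @ [x]) (qM, pjM s')"
      using Cons.prems(6) G(3) by (auto simp: vpa_reach_append)
    obtain pM' S1' S2' s'' where RR: "greach U GG ((p1,p2'',qM,T1,T2), s') v ((p1',p2',pM',S1',S2'), s'')"
      using Cons.IH[of p1 s' p2'' qM T1 T2 "al @ [x]"] r1 r2(2) G Gs vL rM alx TO LW tg1 by auto
    have "greach U GG ((p1,p2,pM,S1,S2), s) (x # v) ((p1',p2',pM',S1',S2'), s'')"
      unfolding greach.simps using G(1) RR by blast
    then show ?thesis by blast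
  qed
qed

end


context prodset
begin

lemma greach_Gst:
  "greach U GG (P, s) v (P', s') \<Longrightarrow> P \<in> Gst \<Longrightarrow> set s \<subseteq> Ggam \<Longrightarrow> P' \<in> Gst"
proof (induction v arbitrary: P s)
  case Nil then show ?case by simp
next
  case (Cons x v)
  then obtain P1 s1 where st: "gstep U GG (P, s) x (P1, s1)" and r: "greach U GG (P1, s1) v (P', s')" by auto
  have "P1 \<in> gst GG \<and> set s1 \<subseteq> ggam GG"
    using gstep_wf[OF GG_wf st] Cons.prems by (simp add: GG_def)
  then show ?case using Cons.IH[OF r] by (simp add: GG_def)
qed

lemma lang_eq:
  assumes l1: "vpa_lang A1 M1 = P1" and l2: "vpa_lang A2 M2 = P2"
    and wm1: "\<forall>w\<in>P1. well_matched A1 w" and wm2: "\<forall>w\<in>P2. well_matched A2 w"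
    and coh: "coherent A1 A2 prec"
  shows "glang U GG = red A1 A2 prec (shuffle A1 A2 P1 P2)"
proof (intro set_eqI iffI)
  fix w assume "w \<in> glang U GG"
  then obtain a b p1 p2 pM S1 S2 s where ab: "a \<in> init M1" "b \<in> init M2"
    and r: "greach U GG ((a, b, q0, L, L), []) w ((p1,p2,pM,S1,S2), s)" and f: "p1 \<in> fin M1" "p2 \<in> fin M2"
    unfolding glang_def GG_def by auto
  have S: "vpa_reach A1 M1 (a, pj1 []) (F A1 w) (p1, pj1 s) \<and> vpa_reach A2 M2 (b, pj2 []) (F A2 w) (p2, pj2 s) \<and>
   w \<in> lists L \<and>
   (\<forall>m<length w. (w ! m \<in> letters A1 \<longrightarrow> w ! m \<in> OB L prec A1 ([] @ take m w)) \<and>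
                  (w ! m \<in> letters A2 \<longrightarrow> w ! m \<in> OB L prec A2 ([] @ take m w)))"
    by (rule sound[OF r]) simp_all
  have "F A1 w \<in> P1" using S ab f l1 unfolding vpa_lang_def by auto
  moreover have "F A2 w \<in> P2" using S ab f l2 unfolding vpa_lang_def by auto
  moreover have "LocW A1 A2 prec w" using S unfolding LocW_def by simp
  ultimately show "w \<in> red A1 A2 prec (shuffle A1 A2 P1 P2)" using S red_char shuffle_F by auto
next
  fix w assume w: "w \<in> red A1 A2 prec (shuffle A1 A2 P1 P2)"
  then have ws: "w \<in> shuffle A1 A2 P1 P2" and lw: "LocW A1 A2 prec w" using red_char by auto
  then have wL: "w \<in> lists L" and f1: "F A1 w \<in> P1" and f2: "F A2 w \<in> P2" by (auto simp: shuffle_F)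
  obtain a p1 t1 where a: "a \<in> init M1" "vpa_reach A1 M1 (a, []) (F A1 w) (p1, t1)" "p1 \<in> fin M1"
    using f1 l1 unfolding vpa_lang_def by auto
  obtain b p2 t2 where b: "b \<in> init M2" "vpa_reach A2 M2 (b, []) (F A2 w) (p2, t2)" "p2 \<in> fin M2"
    using f2 l2 unfolding vpa_lang_def by auto
  have c: "\<forall>j<length w. w ! j \<in> rets U \<longrightarrow> ustk U ([] @ take j w) = [] \<or>
       (hd (ustk U ([] @ take j w)) \<in> letters A1 \<longleftrightarrow> w ! j \<in> letters A1)"
    using core[OF wL _ _ lw coh] wm1 wm2 f1 f2 by simp
  have tg: "tagok A1 A2 (map tagof []) w" using tagok_ustk[OF c] by simp
  have Gs: "(a, b, q0, L, L) \<in> Gst"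
    using a(1) b(1) wf1 wf2 wfM iM by (auto simp: Gst_def vpa_wf_def)
  obtain pM' S1' S2' s' where R: "greach U GG ((a, b, q0, L, L), []) w ((p1,p2,pM',S1',S2'), s')"
    using compl[of a "[]" w p1 t1 b p2 t2 q0 L L "[]"] a(2) b(2) Gs wL tg lw unfolding LocW_def by auto
  have "(p1,p2,pM',S1',S2') \<in> Gst" using greach_Gst[OF R Gs] by simp
  then have fin: "(p1,p2,pM',S1',S2') \<in> gfin GG" using a b by (simp add: GG_def)
  have ini: "(a, b, q0, L, L) \<in> ginit GG" using a b by (simp add: GG_def)
  show "w \<in> glang U GG"
    unfolding glang_def using R fin ini by blast
qed

end

theorem theorem3p18:
  fixes A1 A2 :: "'a vpalph" and P1 P2 :: "'a list set"
    and prec :: "'a list \<Rightarrow> 'a \<Rightarrow> 'a \<Rightarrow> bool"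
  assumes "vp_alphabet A1" and "vp_alphabet A2"
    and "letters A1 \<inter> letters A2 = {}"
    and "P1 \<subseteq> lists (letters A1)" and "P2 \<subseteq> lists (letters A2)"
    and "is_VPL A1 P1" and "is_VPL A2 P2"
    and "\<forall>w \<in> P1. well_matched A1 w" and "\<forall>w \<in> P2. well_matched A2 w"
    and "contextual_order (vp_union A1 A2) prec"
    and "vp_order (vp_union A1 A2) prec"
    and "coherent A1 A2 prec"
  shows "is_VPL (vp_union A1 A2) (red A1 A2 prec (shuffle A1 A2 P1 P2)) \<and>
         (\<forall>w \<in> red A1 A2 prec (shuffle A1 A2 P1 P2). well_nested A1 A2 w)"
proof -
  interpret setting A1 A2 prec using assms(1,2,3,10) by unfold_locales
  obtain M1 where M1: "vpa_wf A1 M1" "vpa_lang A1 M1 = P1" using assms(6) unfolding is_VPL_def by blast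
  obtain M2 where M2: "vpa_wf A2 M2" "vpa_lang A2 M2 = P2" using assms(7) unfolding is_VPL_def by blast
  obtain M ord q0 where M: "det_complete (vp_union A1 A2) M" "init M = {q0}"
    "\<forall>w \<in> lists (letters (vp_union A1 A2)). \<forall>q s. vpa_reach (vp_union A1 A2) M (q0, []) w (q, s) \<longrightarrow> prec w = ord q"
    using assms(11) unfolding vp_order_def by blast
  interpret P: prodset A1 A2 prec M1 M2 M ord q0
    using M1 M2 M by unfold_locales auto
  have "is_VPL (vp_union A1 A2) (red A1 A2 prec (shuffle A1 A2 P1 P2))"
    using gvpa_to_vpa[OF P.GG_wf] P.lang_eq[OF M1(2) M2(2) assms(8,9,12)] unfolding is_VPL_def by auto
  moreover have "\<forall>w \<in> red A1 A2 prec (shuffle A1 A2 P1 P2). well_nested A1 A2 w"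
    using red_well_nested assms(8,9,12) by blast
  ultimately show ?thesis by blast
qed


end
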